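(* In the discrete-time setting described in the context: (i) the mapping $g:\prod_{k=0}^NX_k\times\prod_{k=0}^{N-1}(L^2_{\mathcal F_k})^m\to\prod_{k=0}^NX_k$ is Lipschitz and Gâteaux differentiable, and for $(x,u),(z,v)$ its Gâteaux derivative $Dg(x,u)(z,v)=(Dg_0(x,u)(z,v),\dots,Dg_N(x,u)(z,v))$ is given by $Dg_0(x,u)(z,v)=-z_0$ and, for $k=0,\dots,N-1$, $$Dg_{k+1}(x,u)(z,v)=b_{(x,u)}(k,x_k,u_k)(z_k,v_k)+\sum_{i=1}^d\sigma^i_{(x,u)}(k,x_k,u_k)(z_k,v_k)\,w_{k+1}^i-z_{k+1};$$ (ii) the mapping $f$ is locally Lipschitz and Gâteaux differentiable with $$Df(x,u)(z,v)=\mathbb E\Big(\sum_{k=0}^{N-1}\ell_{(x,u)}(k,x_k,u_k)(z_k,v_k)+D\Phi(x_N)z_N\Big).$$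
   Context: $(\Omega,\mathcal F,\mathbb P)$ is a probability space; $w_1,\dots,w_N$ are independent $\mathbb R^d$-valued random variables, each with independent coordinates satisfying $\mathbb E(w_k^i)=0$, $\mathbb E|w_k^i|^2=1$; $w_0:=0$, $\mathcal F_k=\sigma(w_0,\dots,w_k)$, $L^2_{\mathcal F_k}$ the $\mathcal F_k$-measurable square-integrable random variables. $X_0=\mathbb R^n$ and for $k\ge1$, $X_k=\{y^0+\sum_{i=1}^dy^iw_k^i:\ y^i\in(L^2_{\mathcal F_{k-1}})^n\}$ with inner product $\langle y^0+\sum y^iw_k^i,z^0+\sum z^iw_k^i\rangle_{X_k}=\mathbb E\sum_{i=0}^dy^i\cdot z^i$ (equivalently $\|x\|_{X_k}^2=\mathbb E|x|^2$); products carry the sum of the norms, $(L^2_{\mathcal F_k})^m$ the norm $(\mathbb E|u|^2)^{1/2}$. Data: $b:\{0,\dots,N-1\}\times\mathbb R^n\times\mathbb R^m\to\mathbb R^n$, $\sigma:\{0,\dots,N-1\}\times\mathbb R^n\times\mathbb R^m\to\mathbb R^{n\times d}$ (columns $\sigma^j$), $\ell:\{0,\dots,N-1\}\times\mathbb R^n\times\mathbb R^m\to\mathbb R$, $\Phi:\mathbb R^n\to\mathbb R$, Borel measurable, $C^1$ in $(x,u)$ (resp. $x$), with constants $c_1,c_2>0$ such that for all $k,x,u$ and $\psi\in\{b,\sigma^j\}$: $|\psi(k,x,u)|\le c_1(1+|x|+|u|)$, $|\psi_x|+|\psi_u|\le c_1$; $|\ell(k,x,u)|\le c_2(1+|x|+|u|)^2$,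 $|\ell_x|+|\ell_u|\le c_2(1+|x|+|u|)$, $|\Phi(x)|\le c_2(1+|x|)^2$, $|\Phi_x(x)|\le c_2(1+|x|)$. With $\hat x_0\in\mathbb R^n$: $g_0(x,u)=\hat x_0-x_0$, $g_{k+1}(x,u)=b(k,x_k,u_k)+\sigma(k,x_k,u_k)w_{k+1}-x_{k+1}$ ($k=0,\dots,N-1$), and $f(x,u)=\mathbb E(\sum_{k=0}^{N-1}\ell(k,x_k,u_k)+\Phi(x_N))$. $\psi_{(x,u)}(k,x,u)(z,v)=\psi_xz+\psi_uv$. *)

theory Defs
  imports "HOL-Probability.Probability"
begin

definition filt :: "'a measure \<Rightarrow> (nat \<Rightarrow> 'a \<Rightarrow> real^'d) \<Rightarrow> nat \<Rightarrow> 'a measure" where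
  "filt M w k = sigma (space M) (\<Union>i\<in>{0..k}. {w i -` A \<inter> space M | A. A \<in> sets borel})"

definition L2 :: "'a measure \<Rightarrow> 'a measure \<Rightarrow> ('a \<Rightarrow> 'b::euclidean_space) set" where
  "L2 M F = {u. u \<in> borel_measurable F \<and> integrable M (\<lambda>\<omega>. (norm (u \<omega>))\<^sup>2)}"

definition L2norm :: "'a measure \<Rightarrow> ('a \<Rightarrow> 'b::euclidean_space) \<Rightarrow> real" where
  "L2norm M u = sqrt (\<integral>\<omega>. (norm (u \<omega>))\<^sup>2 \<partial>M)"

text \<open>The spaces X_k: X_0 = R^n (constant random vectors), and for k >= 1
  X_k = { y^0 + sum_i y^i w_k^i : y^i in (L2_{F_{k-1}})^n }.\<close>
definition Xsp :: "'a measure \<Rightarrow> (nat \<Rightarrow> 'a \<Rightarrow> real^'d) \<Rightarrow> nat \<Rightarrow> ('a \<Rightarrow> real^'n) set" where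
  "Xsp M w k = (if k = 0 then {x. \<exists>c. \<forall>\<omega>\<in>space M. x \<omega> = c}
     else {x. \<exists>y0 y. y0 \<in> L2 M (filt M w (k - 1)) \<and> (\<forall>i. y i \<in> L2 M (filt M w (k - 1))) \<and>
           (\<forall>\<omega>\<in>space M. x \<omega> = y0 \<omega> + (\<Sum>i\<in>UNIV. (w k \<omega> $ i) *\<^sub>R y i \<omega>))})"

definition Dom :: "'a measure \<Rightarrow> (nat \<Rightarrow> 'a \<Rightarrow> real^'d) \<Rightarrow> nat
    \<Rightarrow> ((nat \<Rightarrow> 'a \<Rightarrow> real^'n) \<times> (nat \<Rightarrow> 'a \<Rightarrow> real^'m)) set" where
  "Dom M w N = {(x, u). (\<forall>k\<le>N. x k \<in> Xsp M w k) \<and> (\<forall>k<N. u k \<in> L2 M (filt M w k))}"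

definition normX :: "'a measure \<Rightarrow> nat \<Rightarrow> (nat \<Rightarrow> 'a \<Rightarrow> real^'n) \<Rightarrow> real" where
  "normX M N x = (\<Sum>k\<le>N. L2norm M (x k))"

definition normXU :: "'a measure \<Rightarrow> nat \<Rightarrow> (nat \<Rightarrow> 'a \<Rightarrow> real^'n) \<times> (nat \<Rightarrow> 'a \<Rightarrow> real^'m) \<Rightarrow> real" where
  "normXU M N p = (\<Sum>k\<le>N. L2norm M (fst p k)) + (\<Sum>k<N. L2norm M (snd p k))"

definition lincomb :: "real \<Rightarrow> (nat \<Rightarrow> 'a \<Rightarrow> 'b::real_vector) \<Rightarrow> real \<Rightarrow> (nat \<Rightarrow> 'a \<Rightarrow> 'b) \<Rightarrow> nat \<Rightarrow> 'a \<Rightarrow> 'b" where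
  "lincomb a x c y = (\<lambda>k \<omega>. a *\<^sub>R x k \<omega> + c *\<^sub>R y k \<omega>)"

definition plincomb :: "real \<Rightarrow> (nat \<Rightarrow> 'a \<Rightarrow> 'b::real_vector) \<times> (nat \<Rightarrow> 'a \<Rightarrow> 'c::real_vector)
    \<Rightarrow> real \<Rightarrow> (nat \<Rightarrow> 'a \<Rightarrow> 'b) \<times> (nat \<Rightarrow> 'a \<Rightarrow> 'c) \<Rightarrow> (nat \<Rightarrow> 'a \<Rightarrow> 'b) \<times> (nat \<Rightarrow> 'a \<Rightarrow> 'c)" where
  "plincomb a p c q = (lincomb a (fst p) c (fst q), lincomb a (snd p) c (snd q))"

definition gmap :: "(nat \<Rightarrow> 'a \<Rightarrow> real^'d) \<Rightarrow> real^'n \<Rightarrow> (nat \<Rightarrow> real^'n \<Rightarrow> real^'m \<Rightarrow> real^'n)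
    \<Rightarrow> (nat \<Rightarrow> 'd \<Rightarrow> real^'n \<Rightarrow> real^'m \<Rightarrow> real^'n)
    \<Rightarrow> (nat \<Rightarrow> 'a \<Rightarrow> real^'n) \<times> (nat \<Rightarrow> 'a \<Rightarrow> real^'m) \<Rightarrow> nat \<Rightarrow> 'a \<Rightarrow> real^'n" where
  "gmap w x0h b sig p k = (case k of
      0 \<Rightarrow> (\<lambda>\<omega>. x0h - fst p 0 \<omega>)
    | Suc j \<Rightarrow> (\<lambda>\<omega>. b j (fst p j \<omega>) (snd p j \<omega>)
          + (\<Sum>i\<in>UNIV. (w (Suc j) \<omega> $ i) *\<^sub>R sig j i (fst p j \<omega>) (snd p j \<omega>))
          - fst p (Suc j) \<omega>))"

definition fmap :: "'a measure \<Rightarrow> nat \<Rightarrow> (nat \<Rightarrow> real^'n \<Rightarrow> real^'m \<Rightarrow> real) \<Rightarrow> (real^'n \<Rightarrow> real)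
    \<Rightarrow> (nat \<Rightarrow> 'a \<Rightarrow> real^'n) \<times> (nat \<Rightarrow> 'a \<Rightarrow> real^'m) \<Rightarrow> real" where
  "fmap M N ell Phi p = (\<integral>\<omega>. (\<Sum>k<N. ell k (fst p k \<omega>) (snd p k \<omega>)) + Phi (fst p N \<omega>) \<partial>M)"

definition dgmap :: "(nat \<Rightarrow> 'a \<Rightarrow> real^'d)
    \<Rightarrow> (nat \<Rightarrow> real^'n \<Rightarrow> real^'m \<Rightarrow> ((real^'n) \<times> (real^'m)) \<Rightarrow>\<^sub>L (real^'n))
    \<Rightarrow> (nat \<Rightarrow> 'd \<Rightarrow> real^'n \<Rightarrow> real^'m \<Rightarrow> ((real^'n) \<times> (real^'m)) \<Rightarrow>\<^sub>L (real^'n))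
    \<Rightarrow> (nat \<Rightarrow> 'a \<Rightarrow> real^'n) \<times> (nat \<Rightarrow> 'a \<Rightarrow> real^'m)
    \<Rightarrow> (nat \<Rightarrow> 'a \<Rightarrow> real^'n) \<times> (nat \<Rightarrow> 'a \<Rightarrow> real^'m) \<Rightarrow> nat \<Rightarrow> 'a \<Rightarrow> real^'n" where
  "dgmap w Db Dsig p q k = (case k of
      0 \<Rightarrow> (\<lambda>\<omega>. - fst q 0 \<omega>)
    | Suc j \<Rightarrow> (\<lambda>\<omega>. blinfun_apply (Db j (fst p j \<omega>) (snd p j \<omega>)) (fst q j \<omega>, snd q j \<omega>)
          + (\<Sum>i\<in>UNIV. (w (Suc j) \<omega> $ i) *\<^sub>R
                blinfun_apply (Dsig j i (fst p j \<omega>) (snd p j \<omega>)) (fst q j \<omega>, snd q j \<omega>))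
          - fst q (Suc j) \<omega>))"

definition dfmap :: "'a measure \<Rightarrow> nat \<Rightarrow> (nat \<Rightarrow> real^'n \<Rightarrow> real^'m \<Rightarrow> ((real^'n) \<times> (real^'m)) \<Rightarrow>\<^sub>L real)
    \<Rightarrow> (real^'n \<Rightarrow> (real^'n) \<Rightarrow>\<^sub>L real)
    \<Rightarrow> (nat \<Rightarrow> 'a \<Rightarrow> real^'n) \<times> (nat \<Rightarrow> 'a \<Rightarrow> real^'m)
    \<Rightarrow> (nat \<Rightarrow> 'a \<Rightarrow> real^'n) \<times> (nat \<Rightarrow> 'a \<Rightarrow> real^'m) \<Rightarrow> real" where
  "dfmap M N Dell DPhi p q = (\<integral>\<omega>. (\<Sum>k<N. blinfun_apply (Dell k (fst p k \<omega>) (snd p k \<omega>)) (fst q k \<omega>, snd q k \<omega>))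
       + blinfun_apply (DPhi (fst p N \<omega>)) (fst q N \<omega>) \<partial>M)"

definition lipschitz_G :: "'a measure \<Rightarrow> (nat \<Rightarrow> 'a \<Rightarrow> real^'d) \<Rightarrow> nat
    \<Rightarrow> ((nat \<Rightarrow> 'a \<Rightarrow> real^'n) \<times> (nat \<Rightarrow> 'a \<Rightarrow> real^'m) \<Rightarrow> nat \<Rightarrow> 'a \<Rightarrow> real^'n) \<Rightarrow> bool" where
  "lipschitz_G M w N G \<longleftrightarrow> (\<exists>L. \<forall>p\<in>Dom M w N. \<forall>q\<in>Dom M w N.
     normX M N (lincomb 1 (G p) (-1) (G q)) \<le> L * normXU M N (plincomb 1 p (-1) q))"

definition loc_lipschitz_F :: "'a measure \<Rightarrow> (nat \<Rightarrow> 'a \<Rightarrow> real^'d) \<Rightarrow> nat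
    \<Rightarrow> ((nat \<Rightarrow> 'a \<Rightarrow> real^'n) \<times> (nat \<Rightarrow> 'a \<Rightarrow> real^'m) \<Rightarrow> real) \<Rightarrow> bool" where
  "loc_lipschitz_F M w N F \<longleftrightarrow> (\<forall>p\<in>Dom M w N. \<exists>r>0. \<exists>L. \<forall>q1\<in>Dom M w N. \<forall>q2\<in>Dom M w N.
     normXU M N (plincomb 1 q1 (-1) p) < r \<and> normXU M N (plincomb 1 q2 (-1) p) < r \<longrightarrow>
     \<bar>F q1 - F q2\<bar> \<le> L * normXU M N (plincomb 1 q1 (-1) q2))"

text \<open>Gateaux derivative at p: a bounded linear operator DG (into prod X_k, equalities
  understood in the L2 sense) such that (G(p+tq)-G(p))/t -> DG q as t -> 0, for every direction q.\<close>
definition gateaux_deriv_G :: "'a measure \<Rightarrow> (nat \<Rightarrow> 'a \<Rightarrow> real^'d) \<Rightarrow> nat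
    \<Rightarrow> ((nat \<Rightarrow> 'a \<Rightarrow> real^'n) \<times> (nat \<Rightarrow> 'a \<Rightarrow> real^'m) \<Rightarrow> nat \<Rightarrow> 'a \<Rightarrow> real^'n)
    \<Rightarrow> ((nat \<Rightarrow> 'a \<Rightarrow> real^'n) \<times> (nat \<Rightarrow> 'a \<Rightarrow> real^'m) \<Rightarrow> nat \<Rightarrow> 'a \<Rightarrow> real^'n)
    \<Rightarrow> (nat \<Rightarrow> 'a \<Rightarrow> real^'n) \<times> (nat \<Rightarrow> 'a \<Rightarrow> real^'m) \<Rightarrow> bool" where
  "gateaux_deriv_G M w N G DG p \<longleftrightarrow>
     (\<forall>q\<in>Dom M w N. \<forall>k\<le>N. DG q k \<in> Xsp M w k) \<and>
     (\<forall>q1\<in>Dom M w N. \<forall>q2\<in>Dom M w N. \<forall>a c.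
        normX M N (lincomb 1 (DG (plincomb a q1 c q2)) (-1) (lincomb a (DG q1) c (DG q2))) = 0) \<and>
     (\<exists>C. \<forall>q\<in>Dom M w N. normX M N (DG q) \<le> C * normXU M N q) \<and>
     (\<forall>q\<in>Dom M w N. ((\<lambda>t. normX M N (lincomb (1 / t) (lincomb 1 (G (plincomb 1 p t q)) (-1) (G p)) (-1) (DG q)))
         \<longlongrightarrow> 0) (at 0))"

definition gateaux_deriv_F :: "'a measure \<Rightarrow> (nat \<Rightarrow> 'a \<Rightarrow> real^'d) \<Rightarrow> nat
    \<Rightarrow> ((nat \<Rightarrow> 'a \<Rightarrow> real^'n) \<times> (nat \<Rightarrow> 'a \<Rightarrow> real^'m) \<Rightarrow> real)
    \<Rightarrow> ((nat \<Rightarrow> 'a \<Rightarrow> real^'n) \<times> (nat \<Rightarrow> 'a \<Rightarrow> real^'m) \<Rightarrow> real)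
    \<Rightarrow> (nat \<Rightarrow> 'a \<Rightarrow> real^'n) \<times> (nat \<Rightarrow> 'a \<Rightarrow> real^'m) \<Rightarrow> bool" where
  "gateaux_deriv_F M w N F DF p \<longleftrightarrow>
     (\<forall>q1\<in>Dom M w N. \<forall>q2\<in>Dom M w N. \<forall>a c. DF (plincomb a q1 c q2) = a * DF q1 + c * DF q2) \<and>
     (\<exists>C. \<forall>q\<in>Dom M w N. \<bar>DF q\<bar> \<le> C * normXU M N q) \<and>
     (\<forall>q\<in>Dom M w N. ((\<lambda>t. (F (plincomb 1 p t q) - F p) / t) \<longlongrightarrow> DF q) (at 0))"

end

theory Submission
  imports Defs
begin

lemma meas_nth[measurable (raw)]: "w \<in> borel_measurable M \<Longrightarrow> (\<lambda>x. (w x :: real^'n) $ i) \<in> borel_measurable M"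
  by (rule measurable_compose[OF _ borel_measurable_nth])

lemma L2_iff: "f \<in> L2 M F \<longleftrightarrow> f \<in> borel_measurable F \<and> integrable M (\<lambda>\<omega>. (norm (f \<omega>))\<^sup>2)"
  by (simp add: L2_def)

lemma L2norm_nonneg: "L2norm M f \<ge> 0"
  by (simp add: L2norm_def)

lemma L2norm_sq: "(L2norm M f)\<^sup>2 = (\<integral>\<omega>. (norm (f \<omega>))\<^sup>2 \<partial>M)"
  by (simp add: L2norm_def integral_nonneg)

lemma L2norm_norm: "L2norm M (\<lambda>\<omega>. norm (f \<omega>)) = L2norm M f"
  by (simp add: L2norm_def)

lemma L2_norm: "f \<in> L2 M M \<Longrightarrow> (\<lambda>\<omega>. norm (f \<omega>)) \<in> L2 M M"
  by (auto simp: L2_def intro: borel_measurable_norm)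

lemma L2_CS:
  fixes f g :: "'a \<Rightarrow> real"
  assumes f: "f \<in> L2 M M" and g: "g \<in> L2 M M"
  shows "integrable M (\<lambda>\<omega>. f \<omega> * g \<omega>)"
    and "(\<integral>\<omega>. \<bar>f \<omega> * g \<omega>\<bar> \<partial>M) \<le> L2norm M f * L2norm M g"
proof -
  have fm[measurable]: "f \<in> borel_measurable M" and gm[measurable]: "g \<in> borel_measurable M"
    and fi: "integrable M (\<lambda>\<omega>. (f \<omega>)\<^sup>2)" and gi: "integrable M (\<lambda>\<omega>. (g \<omega>)\<^sup>2)"
    using f g by (auto simp: L2_def)
  show int: "integrable M (\<lambda>\<omega>. f \<omega> * g \<omega>)"
  proof (rule Bochner_Integration.integrable_bound[where f="\<lambda>\<omega>. (f \<omega>)\<^sup>2 + (g \<omega>)\<^sup>2"])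
    show "integrable M (\<lambda>\<omega>. (f \<omega>)\<^sup>2 + (g \<omega>)\<^sup>2)" using fi gi by auto
    show "AE x in M. norm (f x * g x) \<le> norm ((f x)\<^sup>2 + (g x)\<^sup>2)"
    proof (intro AE_I2)
      fix x
      have "2 * \<bar>f x * g x\<bar> \<le> (f x)\<^sup>2 + (g x)\<^sup>2"
        using sum_squares_bound[of "\<bar>f x\<bar>" "\<bar>g x\<bar>"] by (simp add: abs_mult mult.assoc)
      then show "norm (f x * g x) \<le> norm ((f x)\<^sup>2 + (g x)\<^sup>2)" by simp
    qed
  qed simp
  have "(\<integral>\<^sup>+x. ennreal \<bar>f x\<bar> * ennreal \<bar>g x\<bar> \<partial>M)\<^sup>2
      \<le> (\<integral>\<^sup>+x. (ennreal \<bar>f x\<bar>) ^ 2 \<partial>M) * (\<integral>\<^sup>+x. (ennreal \<bar>g x\<bar>) ^ 2 \<partial>M)"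
    by (rule Cauchy_Schwarz_nn_integral) auto
  moreover have "(\<integral>\<^sup>+x. ennreal \<bar>f x\<bar> * ennreal \<bar>g x\<bar> \<partial>M) = ennreal (\<integral>x. \<bar>f x * g x\<bar> \<partial>M)"
  proof -
    have ai: "integrable M (\<lambda>x. \<bar>f x\<bar> * \<bar>g x\<bar>)" using integrable_abs[OF int] by (simp add: abs_mult)
    show ?thesis by (subst ennreal_mult'[symmetric]) (auto simp: abs_mult intro!: nn_integral_eq_integral ai)
  qed
  moreover have "(\<integral>\<^sup>+x. (ennreal \<bar>f x\<bar>) ^ 2 \<partial>M) = ennreal (\<integral>x. (f x)\<^sup>2 \<partial>M)"
  proof -
    have "(\<integral>\<^sup>+x. (ennreal \<bar>f x\<bar>) ^ 2 \<partial>M) = (\<integral>\<^sup>+x. ennreal ((f x)\<^sup>2) \<partial>M)" by (simp add: ennreal_power)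
    also have "\<dots> = ennreal (\<integral>x. (f x)\<^sup>2 \<partial>M)" by (rule nn_integral_eq_integral[OF fi]) auto
    finally show ?thesis .
  qed
  moreover have "(\<integral>\<^sup>+x. (ennreal \<bar>g x\<bar>) ^ 2 \<partial>M) = ennreal (\<integral>x. (g x)\<^sup>2 \<partial>M)"
  proof -
    have "(\<integral>\<^sup>+x. (ennreal \<bar>g x\<bar>) ^ 2 \<partial>M) = (\<integral>\<^sup>+x. ennreal ((g x)\<^sup>2) \<partial>M)" by (simp add: ennreal_power)
    also have "\<dots> = ennreal (\<integral>x. (g x)\<^sup>2 \<partial>M)" by (rule nn_integral_eq_integral[OF gi]) auto
    finally show ?thesis .
  qed
  ultimately have "ennreal ((\<integral>x. \<bar>f x * g x\<bar> \<partial>M)\<^sup>2) \<le> ennreal ((\<integral>x. (f x)\<^sup>2 \<partial>M) * (\<integral>x. (g x)\<^sup>2 \<partial>M))"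
    by (simp add: ennreal_power ennreal_mult' integral_nonneg)
  then have "(\<integral>x. \<bar>f x * g x\<bar> \<partial>M)\<^sup>2 \<le> (\<integral>x. (f x)\<^sup>2 \<partial>M) * (\<integral>x. (g x)\<^sup>2 \<partial>M)"
    by (subst (asm) ennreal_le_iff) (auto simp: integral_nonneg)
  then have "sqrt ((\<integral>x. \<bar>f x * g x\<bar> \<partial>M)\<^sup>2) \<le> sqrt ((\<integral>x. (f x)\<^sup>2 \<partial>M) * (\<integral>x. (g x)\<^sup>2 \<partial>M))"
    by (rule real_sqrt_le_mono)
  then show "(\<integral>\<omega>. \<bar>f \<omega> * g \<omega>\<bar> \<partial>M) \<le> L2norm M f * L2norm M g"
    by (simp add: L2norm_def real_sqrt_mult integral_nonneg)
qed

lemma L2_add: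
  fixes f g :: "'a \<Rightarrow> 'b::euclidean_space"
  assumes f: "f \<in> L2 M M" and g: "g \<in> L2 M M"
  shows "(\<lambda>\<omega>. f \<omega> + g \<omega>) \<in> L2 M M"
    and "L2norm M (\<lambda>\<omega>. f \<omega> + g \<omega>) \<le> L2norm M f + L2norm M g"
proof -
  have fm[measurable]: "f \<in> borel_measurable M" and gm[measurable]: "g \<in> borel_measurable M"
    and fi: "integrable M (\<lambda>\<omega>. (norm (f \<omega>))\<^sup>2)" and gi: "integrable M (\<lambda>\<omega>. (norm (g \<omega>))\<^sup>2)"
    using f g by (auto simp: L2_def)
  have nf: "(\<lambda>\<omega>. norm (f \<omega>)) \<in> L2 M M" and ng: "(\<lambda>\<omega>. norm (g \<omega>)) \<in> L2 M M"
    using f g by (auto simp: L2_def)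
  note cs = L2_CS[OF nf ng]
  have bnd: "(norm (f x + g x))\<^sup>2 \<le> (norm (f x))\<^sup>2 + 2 * (norm (f x) * norm (g x)) + (norm (g x))\<^sup>2" for x
  proof -
    have "(norm (f x + g x))\<^sup>2 \<le> (norm (f x) + norm (g x))\<^sup>2"
      by (intro power_mono norm_triangle_ineq) auto
    then show ?thesis by (simp add: power2_sum)
  qed
  have ib: "integrable M (\<lambda>x. (norm (f x))\<^sup>2 + 2 * (norm (f x) * norm (g x)) + (norm (g x))\<^sup>2)"
    using fi gi cs(1) by auto
  have bnd': "norm ((norm (f x + g x))\<^sup>2) \<le> norm ((norm (f x))\<^sup>2 + 2 * (norm (f x) * norm (g x)) + (norm (g x))\<^sup>2)" for x
  proof -
    have nn: "0 \<le> (norm (f x))\<^sup>2 + 2 * (norm (f x) * norm (g x)) + (norm (g x))\<^sup>2" by simp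
    show ?thesis unfolding real_norm_def abs_of_nonneg[OF nn] abs_of_nonneg[OF zero_le_power2] by (rule bnd)
  qed
  have int: "integrable M (\<lambda>\<omega>. (norm (f \<omega> + g \<omega>))\<^sup>2)"
    by (rule Bochner_Integration.integrable_bound[OF ib]) (measurable, rule AE_I2, rule bnd')
  then show "(\<lambda>\<omega>. f \<omega> + g \<omega>) \<in> L2 M M" by (simp add: L2_def)
  have I1: "(\<integral>x. (norm (f x + g x))\<^sup>2 \<partial>M) \<le> (\<integral>x. (norm (f x))\<^sup>2 + 2 * (norm (f x) * norm (g x)) + (norm (g x))\<^sup>2 \<partial>M)"
    using integral_mono[OF int ib] bnd by blast
  have I1': "(\<integral>x. (norm (f x))\<^sup>2 + 2 * (norm (f x) * norm (g x)) + (norm (g x))\<^sup>2 \<partial>M) = (\<integral>x. (norm (f x))\<^sup>2 \<partial>M) + 2 * (\<integral>x. norm (f x) * norm (g x) \<partial>M) + (\<integral>x. (norm (g x))\<^sup>2 \<partial>M)"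
    using fi gi cs(1) by simp
  have I2: "(\<integral>x. norm (f x) * norm (g x) \<partial>M) \<le> L2norm M f * L2norm M g"
    using cs(2) by (simp add: L2norm_norm)
  have "(L2norm M (\<lambda>\<omega>. f \<omega> + g \<omega>))\<^sup>2 \<le> (L2norm M f + L2norm M g)\<^sup>2"
    unfolding power2_sum L2norm_sq[of M "\<lambda>\<omega>. f \<omega> + g \<omega>"] L2norm_sq[of M f] L2norm_sq[of M g]
    using I1 I1' I2 by linarith
  then show "L2norm M (\<lambda>\<omega>. f \<omega> + g \<omega>) \<le> L2norm M f + L2norm M g"
    by (rule power2_le_imp_le[OF _ add_nonneg_nonneg[OF L2norm_nonneg L2norm_nonneg]])
qed

lemma L2_scale:
  fixes f :: "'a \<Rightarrow> 'b::euclidean_space"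
  assumes f: "f \<in> L2 M M"
  shows "(\<lambda>\<omega>. c *\<^sub>R f \<omega>) \<in> L2 M M" and "L2norm M (\<lambda>\<omega>. c *\<^sub>R f \<omega>) = \<bar>c\<bar> * L2norm M f"
proof -
  have [measurable]: "f \<in> borel_measurable M" and fi: "integrable M (\<lambda>\<omega>. (norm (f \<omega>))\<^sup>2)"
    using f by (auto simp: L2_def)
  show "(\<lambda>\<omega>. c *\<^sub>R f \<omega>) \<in> L2 M M" using fi by (simp add: L2_def power_mult_distrib)
  show "L2norm M (\<lambda>\<omega>. c *\<^sub>R f \<omega>) = \<bar>c\<bar> * L2norm M f"
    by (simp add: L2norm_def power_mult_distrib real_sqrt_mult)
qed

lemma L2_diff:
  fixes f g :: "'a \<Rightarrow> 'b::euclidean_space"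
  assumes f: "f \<in> L2 M M" and g: "g \<in> L2 M M"
  shows "(\<lambda>\<omega>. f \<omega> - g \<omega>) \<in> L2 M M"
    and "L2norm M (\<lambda>\<omega>. f \<omega> - g \<omega>) \<le> L2norm M f + L2norm M g"
  using L2_add[OF f L2_scale(1)[OF g, of "-1"]] L2_scale(2)[OF g, of "-1"] by auto

lemma L2_sum:
  fixes f :: "'i \<Rightarrow> 'a \<Rightarrow> 'b::euclidean_space"
  assumes "finite I" "\<And>i. i \<in> I \<Longrightarrow> f i \<in> L2 M M"
  shows "(\<lambda>\<omega>. \<Sum>i\<in>I. f i \<omega>) \<in> L2 M M \<and> L2norm M (\<lambda>\<omega>. \<Sum>i\<in>I. f i \<omega>) \<le> (\<Sum>i\<in>I. L2norm M (f i))"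
  using assms
proof (induction I rule: finite_induct)
  case empty
  then show ?case by (simp add: L2_def L2norm_def)
next
  case (insert x F)
  then have a: "(\<lambda>\<omega>. \<Sum>i\<in>F. f i \<omega>) \<in> L2 M M" "L2norm M (\<lambda>\<omega>. \<Sum>i\<in>F. f i \<omega>) \<le> (\<Sum>i\<in>F. L2norm M (f i))"
    and b: "f x \<in> L2 M M" by auto
  show ?case using L2_add[OF b a(1)] a(2) insert by simp
qed

lemma L2_mono:
  fixes f :: "'a \<Rightarrow> 'b::euclidean_space" and g :: "'a \<Rightarrow> 'c::euclidean_space"
  assumes f: "f \<in> borel_measurable M" and g: "g \<in> L2 M M"
    and le: "\<And>\<omega>. \<omega> \<in> space M \<Longrightarrow> norm (f \<omega>) \<le> norm (g \<omega>)"
  shows "f \<in> L2 M M" and "L2norm M f \<le> L2norm M g"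
proof -
  have [measurable]: "g \<in> borel_measurable M" and gi: "integrable M (\<lambda>\<omega>. (norm (g \<omega>))\<^sup>2)"
    using g by (auto simp: L2_def)
  note [measurable] = f
  have le2: "\<omega> \<in> space M \<Longrightarrow> (norm (f \<omega>))\<^sup>2 \<le> (norm (g \<omega>))\<^sup>2" for \<omega>
    by (rule power_mono[OF le]) auto
  have le3: "\<omega> \<in> space M \<Longrightarrow> norm ((norm (f \<omega>))\<^sup>2) \<le> norm ((norm (g \<omega>))\<^sup>2)" for \<omega>
    using le2[of \<omega>] by simp
  have fi: "integrable M (\<lambda>\<omega>. (norm (f \<omega>))\<^sup>2)"
    by (rule Bochner_Integration.integrable_bound[OF gi]) (simp, rule AE_I2, rule le3)
  then show "f \<in> L2 M M" by (simp add: L2_def)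
  have "(\<integral>\<omega>. (norm (f \<omega>))\<^sup>2 \<partial>M) \<le> (\<integral>\<omega>. (norm (g \<omega>))\<^sup>2 \<partial>M)"
    by (intro integral_mono fi gi le2)
  then show "L2norm M f \<le> L2norm M g" by (simp add: L2norm_def)
qed

lemma L2_lin2:
  fixes f :: "'a \<Rightarrow> 'b::euclidean_space" and g :: "'a \<Rightarrow> 'c::euclidean_space" and h :: "'a \<Rightarrow> 'e::euclidean_space"
  assumes f: "f \<in> borel_measurable M" and g: "g \<in> L2 M M" and h: "h \<in> L2 M M" and a: "a \<ge> 0" and c: "c \<ge> 0"
    and le: "\<And>\<omega>. \<omega> \<in> space M \<Longrightarrow> norm (f \<omega>) \<le> a * norm (g \<omega>) + c * norm (h \<omega>)"
  shows "f \<in> L2 M M" and "L2norm M f \<le> a * L2norm M g + c * L2norm M h"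
proof -
  have g1: "(\<lambda>\<omega>. a *\<^sub>R norm (g \<omega>)) \<in> L2 M M" "L2norm M (\<lambda>\<omega>. a *\<^sub>R norm (g \<omega>)) = a * L2norm M g"
    using L2_scale[OF L2_norm[OF g], of a] a by (auto simp: L2norm_norm)
  have h1: "(\<lambda>\<omega>. c *\<^sub>R norm (h \<omega>)) \<in> L2 M M" "L2norm M (\<lambda>\<omega>. c *\<^sub>R norm (h \<omega>)) = c * L2norm M h"
    using L2_scale[OF L2_norm[OF h], of c] c by (auto simp: L2norm_norm)
  have s: "(\<lambda>\<omega>. a *\<^sub>R norm (g \<omega>) + c *\<^sub>R norm (h \<omega>)) \<in> L2 M M"
    "L2norm M (\<lambda>\<omega>. a *\<^sub>R norm (g \<omega>) + c *\<^sub>R norm (h \<omega>)) \<le> a * L2norm M g + c * L2norm M h"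
    using L2_add[OF g1(1) h1(1)] g1(2) h1(2) by auto
  have le': "\<omega> \<in> space M \<Longrightarrow> norm (f \<omega>) \<le> norm (a *\<^sub>R norm (g \<omega>) + c *\<^sub>R norm (h \<omega>))" for \<omega>
    using le[of \<omega>] a c by simp
  show "f \<in> L2 M M" by (rule L2_mono(1)[OF f s(1) le'])
  show "L2norm M f \<le> a * L2norm M g + c * L2norm M h"
    using L2_mono(2)[OF f s(1) le'] s(2) by linarith
qed

lemma L2_cong:
  assumes "f \<in> L2 M F" "space F = space M" "\<And>\<omega>. \<omega> \<in> space M \<Longrightarrow> f \<omega> = g \<omega>"
  shows "g \<in> L2 M F"
proof -
  have "g \<in> borel_measurable F" using assms measurable_cong[of F f g borel] by (auto simp: L2_def)
  moreover have "integrable M (\<lambda>\<omega>. (norm (g \<omega>))\<^sup>2) = integrable M (\<lambda>\<omega>. (norm (f \<omega>))\<^sup>2)"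
    by (rule Bochner_Integration.integrable_cong) (auto simp: assms(3))
  moreover have "integrable M (\<lambda>\<omega>. (norm (f \<omega>))\<^sup>2)" using assms(1) by (simp add: L2_def)
  ultimately show ?thesis by (simp add: L2_def)
qed

lemma L2norm_cong:
  assumes "\<And>\<omega>. \<omega> \<in> space M \<Longrightarrow> f \<omega> = g \<omega>"
  shows "L2norm M f = L2norm M g"
  using assms unfolding L2norm_def by (auto intro!: arg_cong[where f=sqrt] Bochner_Integration.integral_cong)

locale L62 =
  fixes M :: "'a measure" and w :: "nat \<Rightarrow> 'a \<Rightarrow> real^'d" and N :: nat
  assumes P: "prob_space M"
    and w0: "w 0 = (\<lambda>\<omega>. 0)"
    and w_meas: "\<forall>k\<in>{1..N}. w k \<in> borel_measurable M"
    and w_indep: "prob_space.indep_vars M (\<lambda>_. borel) w {1..N}"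
    and w_moments: "\<forall>k\<in>{1..N}. \<forall>i. integrable M (\<lambda>\<omega>. w k \<omega> $ i) \<and> integrable M (\<lambda>\<omega>. (w k \<omega> $ i)\<^sup>2)
        \<and> (\<integral>\<omega>. w k \<omega> $ i \<partial>M) = 0 \<and> (\<integral>\<omega>. (w k \<omega> $ i)\<^sup>2 \<partial>M) = 1"
begin

sublocale prob_space M by (rule P)

abbreviation "E k \<equiv> {w k -` A \<inter> space M | A. A \<in> sets (borel :: (real^'d) measure)}"

lemma space_filt[simp]: "space (filt M w k) = space M"
  by (simp add: filt_def space_measure_of_conv)

lemma sets_filt: "sets (filt M w k) = sigma_sets (space M) (\<Union>i\<in>{0..k}. E i)"
  unfolding filt_def by (rule sets_measure_of) auto

lemma w_meas': "k \<le> N \<Longrightarrow> w k \<in> borel_measurable M"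
  using w_meas w0 by (cases k) auto

lemma filt_sub_M: "k \<le> N \<Longrightarrow> sets (filt M w k) \<subseteq> sets M"
  unfolding sets_filt
  by (rule sets.sigma_sets_subset) (auto intro!: measurable_sets w_meas')

lemma filt_mono: "j \<le> k \<Longrightarrow> sets (filt M w j) \<subseteq> sets (filt M w k)"
  unfolding sets_filt by (rule sigma_sets_mono'[OF UN_mono]) auto

lemma meas_mono: "f \<in> borel_measurable (filt M w j) \<Longrightarrow> j \<le> k \<Longrightarrow> f \<in> borel_measurable (filt M w k)"
  by (rule measurable_from_subalg[of _ "filt M w j"]) (auto simp: subalgebra_def filt_mono)

lemma meas_M: "f \<in> borel_measurable (filt M w k) \<Longrightarrow> k \<le> N \<Longrightarrow> f \<in> borel_measurable M"
  by (rule measurable_from_subalg[of _ "filt M w k"]) (auto simp: subalgebra_def filt_sub_M)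

lemma w_filt: "w k \<in> borel_measurable (filt M w k)"
  unfolding measurable_def
proof (intro CollectI conjI ballI)
  show "w k \<in> space (filt M w k) \<rightarrow> space borel" by simp
  fix A :: "(real^'d) set" assume "A \<in> sets borel"
  then have "w k -` A \<inter> space M \<in> E k" by blast
  then have "w k -` A \<inter> space M \<in> (\<Union>i\<in>{0..k}. E i)" by (rule UN_I[rotated]) auto
  then show "w k -` A \<inter> space (filt M w k) \<in> sets (filt M w k)"
    unfolding sets_filt by auto
qed

lemma w_filt': "j \<le> k \<Longrightarrow> w j \<in> borel_measurable (filt M w k)"
  using meas_mono[OF w_filt] .

lemma L2_filt_M: "f \<in> L2 M (filt M w k) \<Longrightarrow> k \<le> N \<Longrightarrow> f \<in> L2 M M"
  by (auto simp: L2_def intro: meas_M)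

lemma L2_filt_mono: "f \<in> L2 M (filt M w j) \<Longrightarrow> j \<le> k \<Longrightarrow> f \<in> L2 M (filt M w k)"
  by (auto simp: L2_def intro: meas_mono)

lemma E_Int_stable: "Int_stable (E i)"
  apply (auto simp: Int_stable_def)
  apply (rule_tac x="A \<inter> Aa" in exI)
  apply auto
  done

lemma indep_filt:
  fixes f :: "'a \<Rightarrow> real" and g :: "real^'d \<Rightarrow> real"
  assumes j: "j < N" and f: "f \<in> borel_measurable (filt M w j)" and g: "g \<in> borel_measurable borel"
  shows "indep_var borel f borel (\<lambda>\<omega>. g (w (Suc j) \<omega>))"
proof -
  have ind: "indep_sets E {1..N}"
    using w_indep by (simp add: indep_vars_def2)
  define I where "I = (\<lambda>b. if b then {1..j} else {Suc j})"
  have ind2: "indep_sets E (\<Union>b. I b)"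
    by (rule indep_sets_mono_index[OF _ ind]) (use j in \<open>auto simp: I_def\<close>)
  have dj: "disjoint_family_on I UNIV"
    by (auto simp: disjoint_family_on_def I_def)
  have col: "indep_sets (\<lambda>b. sigma_sets (space M) (\<Union>i\<in>I b. E i)) UNIV"
    by (rule indep_sets_collect_sigma[OF ind2 E_Int_stable dj])
  have E0: "(\<Union>i\<in>{0..j}. E i) \<subseteq> sigma_sets (space M) (\<Union>i\<in>{1..j}. E i)"
  proof
    fix X assume "X \<in> (\<Union>i\<in>{0..j}. E i)"
    then obtain i A where iA: "i \<in> {0..j}" "X = w i -` A \<inter> space M" "A \<in> sets borel" by auto
    show "X \<in> sigma_sets (space M) (\<Union>i\<in>{1..j}. E i)"
    proof (cases "i = 0")
      case True
      then have "X = space M \<or> X = {}" using iA w0 by auto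
      then show ?thesis by (auto intro: sigma_sets_top sigma_sets.Empty)
    next
      case False
      have "i \<in> {1..j}" using iA False by auto
      moreover have "X \<in> E i" using iA by blast
      ultimately have "X \<in> (\<Union>i\<in>{1..j}. E i)" by blast
      then show ?thesis by (rule sigma_sets.Basic)
    qed
  qed
  have s1: "sigma_sets (space M) {f -` A \<inter> space M | A. A \<in> sets borel}
      \<subseteq> sigma_sets (space M) (\<Union>i\<in>I True. E i)"
  proof (rule sigma_sets_mono)
    have "{f -` A \<inter> space M | A. A \<in> sets borel} \<subseteq> sets (filt M w j)"
      using measurable_sets[OF f] by auto
    also have "\<dots> \<subseteq> sigma_sets (space M) (\<Union>i\<in>{1..j}. E i)"
      unfolding sets_filt by (rule sigma_sets_mono[OF E0])
    finally show "{f -` A \<inter> space M | A. A \<in> sets borel} \<subseteq> sigma_sets (space M) (\<Union>i\<in>I True. E i)"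
      by (simp add: I_def)
  qed
  have s2: "sigma_sets (space M) {(\<lambda>\<omega>. g (w (Suc j) \<omega>)) -` A \<inter> space M | A. A \<in> sets borel}
      \<subseteq> sigma_sets (space M) (\<Union>i\<in>I False. E i)"
  proof (rule sigma_sets_mono')
    show "{(\<lambda>\<omega>. g (w (Suc j) \<omega>)) -` A \<inter> space M | A. A \<in> sets borel} \<subseteq> (\<Union>i\<in>I False. E i)"
    proof
      fix X assume "X \<in> {(\<lambda>\<omega>. g (w (Suc j) \<omega>)) -` A \<inter> space M | A. A \<in> sets borel}"
      then obtain A where A: "A \<in> sets borel" "X = (\<lambda>\<omega>. g (w (Suc j) \<omega>)) -` A \<inter> space M" by auto
      have "g -` A \<in> sets borel" using measurable_sets[OF g A(1)] by simp
      moreover have "X = w (Suc j) -` (g -` A) \<inter> space M" using A by auto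
      ultimately show "X \<in> (\<Union>i\<in>I False. E i)" by (auto simp: I_def)
    qed
  qed
  have rv1: "random_variable borel f" using meas_M[OF f] j by simp
  have rv2: "random_variable borel (\<lambda>\<omega>. g (w (Suc j) \<omega>))"
  proof -
    have [measurable]: "w (Suc j) \<in> borel_measurable M" using w_meas'[of "Suc j"] j by simp
    note [measurable] = g
    show ?thesis by measurable
  qed
  show ?thesis
    unfolding indep_var_eq indep_set_def
    apply (intro conjI rv1 rv2)
    apply (rule indep_sets_mono_sets[OF col])
    subgoal for b using s1 s2 by (cases b) auto
    done
qed

lemma indep_sq:
  fixes f :: "'a \<Rightarrow> real"
  assumes j: "j < N" and f: "f \<in> borel_measurable (filt M w j)" and fi: "integrable M f"
  shows "integrable M (\<lambda>\<omega>. (w (Suc j) \<omega> $ i)\<^sup>2 * f \<omega>)"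
    and "(\<integral>\<omega>. (w (Suc j) \<omega> $ i)\<^sup>2 * f \<omega> \<partial>M) = (\<integral>\<omega>. f \<omega> \<partial>M)"
proof -
  have iv': "indep_var borel f borel (\<lambda>\<omega>. (w (Suc j) \<omega> $ i)\<^sup>2)"
    by (rule indep_filt[OF j f, of "\<lambda>v. (v $ i)\<^sup>2"]) measurable
  have wi: "integrable M (\<lambda>\<omega>. (w (Suc j) \<omega> $ i)\<^sup>2)" and w1: "(\<integral>\<omega>. (w (Suc j) \<omega> $ i)\<^sup>2 \<partial>M) = 1"
    using w_moments j by auto
  show "integrable M (\<lambda>\<omega>. (w (Suc j) \<omega> $ i)\<^sup>2 * f \<omega>)"
    using indep_var_integrable[OF iv' fi wi] by (simp add: mult.commute)
  show "(\<integral>\<omega>. (w (Suc j) \<omega> $ i)\<^sup>2 * f \<omega> \<partial>M) = (\<integral>\<omega>. f \<omega> \<partial>M)"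
    using indep_var_lebesgue_integral[OF iv' fi wi] w1 by (simp add: mult.commute)
qed

lemma L2_w:
  fixes Y :: "'a \<Rightarrow> 'b::euclidean_space"
  assumes j: "j < N" and Y: "Y \<in> L2 M (filt M w j)"
  shows "(\<lambda>\<omega>. (w (Suc j) \<omega> $ i) *\<^sub>R Y \<omega>) \<in> L2 M M"
    and "L2norm M (\<lambda>\<omega>. (w (Suc j) \<omega> $ i) *\<^sub>R Y \<omega>) = L2norm M Y"
proof -
  have Ym: "Y \<in> borel_measurable (filt M w j)" and Yi: "integrable M (\<lambda>\<omega>. (norm (Y \<omega>))\<^sup>2)"
    using Y by (auto simp: L2_def)
  have Ym'[measurable]: "Y \<in> borel_measurable M" using meas_M[OF Ym] j by simp
  have wm[measurable]: "w (Suc j) \<in> borel_measurable M" using w_meas' j by simp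
  have fm: "(\<lambda>\<omega>. (norm (Y \<omega>))\<^sup>2) \<in> borel_measurable (filt M w j)"
    using Ym by measurable
  note k = indep_sq[OF j fm Yi, of i]
  have eq: "(\<lambda>\<omega>. (norm ((w (Suc j) \<omega> $ i) *\<^sub>R Y \<omega>))\<^sup>2) = (\<lambda>\<omega>. (w (Suc j) \<omega> $ i)\<^sup>2 * (norm (Y \<omega>))\<^sup>2)"
    by (simp add: fun_eq_iff power_mult_distrib)
  show "(\<lambda>\<omega>. (w (Suc j) \<omega> $ i) *\<^sub>R Y \<omega>) \<in> L2 M M"
    unfolding L2_def mem_Collect_eq eq by (intro conjI k(1)) measurable
  show "L2norm M (\<lambda>\<omega>. (w (Suc j) \<omega> $ i) *\<^sub>R Y \<omega>) = L2norm M Y"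
    unfolding L2norm_def eq k(2) ..
qed

lemma Xsp_L2:
  fixes x :: "'a \<Rightarrow> real^'n"
  assumes k: "k \<le> N" and x: "x \<in> Xsp M w k"
  shows "x \<in> L2 M (filt M w k)"
proof (cases k)
  case 0
  then obtain c where c: "\<forall>\<omega>\<in>space M. x \<omega> = c" using x by (auto simp: Xsp_def)
  have "(\<lambda>\<omega>. c) \<in> L2 M (filt M w k)" by (simp add: L2_def)
  then show ?thesis by (rule L2_cong) (use c in auto)
next
  case (Suc j)
  then obtain y0 y where y0: "y0 \<in> L2 M (filt M w j)" and y: "\<forall>i. y i \<in> L2 M (filt M w j)"
    and xe: "\<forall>\<omega>\<in>space M. x \<omega> = y0 \<omega> + (\<Sum>i\<in>UNIV. (w k \<omega> $ i) *\<^sub>R y i \<omega>)"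
    using x by (auto simp: Xsp_def)
  have j: "j < N" using k Suc by simp
  have y0m[measurable]: "y0 \<in> borel_measurable (filt M w k)" using y0 Suc by (auto simp: L2_def intro: meas_mono)
  have ym[measurable]: "y i \<in> borel_measurable (filt M w k)" for i using y Suc by (auto simp: L2_def intro: meas_mono)
  have wm[measurable]: "w k \<in> borel_measurable (filt M w k)" by (rule w_filt)
  have m: "(\<lambda>\<omega>. y0 \<omega> + (\<Sum>i\<in>UNIV. (w k \<omega> $ i) *\<^sub>R y i \<omega>)) \<in> borel_measurable (filt M w k)"
    by measurable
  have s: "(\<lambda>\<omega>. \<Sum>i\<in>UNIV. (w k \<omega> $ i) *\<^sub>R y i \<omega>) \<in> L2 M M"
    using L2_sum[of UNIV "\<lambda>i \<omega>. (w (Suc j) \<omega> $ i) *\<^sub>R y i \<omega>" M] L2_w(1)[OF j y[rule_format]] Suc by auto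
  have "(\<lambda>\<omega>. y0 \<omega> + (\<Sum>i\<in>UNIV. (w k \<omega> $ i) *\<^sub>R y i \<omega>)) \<in> L2 M M"
    using L2_add(1)[OF L2_filt_M[OF y0] s] j by simp
  then have "(\<lambda>\<omega>. y0 \<omega> + (\<Sum>i\<in>UNIV. (w k \<omega> $ i) *\<^sub>R y i \<omega>)) \<in> L2 M (filt M w k)"
    using m by (simp add: L2_def)
  then show ?thesis by (rule L2_cong) (use xe in auto)
qed

end

lemma blin_bound:
  fixes D :: "('x::real_normed_vector \<times> 'y::real_normed_vector) \<Rightarrow>\<^sub>L 'z::real_normed_vector"
  assumes "onorm (\<lambda>z. blinfun_apply D (z, 0)) + onorm (\<lambda>v. blinfun_apply D (0, v)) \<le> c"
  shows "norm (blinfun_apply D (z, v)) \<le> c * norm (z, v)"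
    and "norm (blinfun_apply D (z, v)) \<le> c * (norm z + norm v)"
    and "c \<ge> 0"
proof -
  have bl1: "bounded_linear (\<lambda>z. blinfun_apply D (z, 0))"
    by (intro bounded_linear_compose[OF blinfun.bounded_linear_right] bounded_linear_Pair bounded_linear_ident bounded_linear_zero)
  have bl2: "bounded_linear (\<lambda>v. blinfun_apply D (0, v))"
    by (intro bounded_linear_compose[OF blinfun.bounded_linear_right] bounded_linear_Pair bounded_linear_ident bounded_linear_zero)
  define oz where "oz = onorm (\<lambda>z. blinfun_apply D (z, 0))"
  define ov where "ov = onorm (\<lambda>v. blinfun_apply D (0, v))"
  have oz0: "oz \<ge> 0" unfolding oz_def by (rule onorm_pos_le[OF bl1])
  have ov0: "ov \<ge> 0" unfolding ov_def by (rule onorm_pos_le[OF bl2])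
  have split: "blinfun_apply D (z, v) = blinfun_apply D (z, 0) + blinfun_apply D (0, v)"
    by (metis add.right_neutral add_Pair add_0 blinfun.add_right)
  have tri: "norm (blinfun_apply D (z, v)) \<le> norm (blinfun_apply D (z, 0)) + norm (blinfun_apply D (0, v))"
    using split norm_triangle_ineq by metis
  have "norm (blinfun_apply D (z, v)) \<le> oz * norm z + ov * norm v"
    using tri onorm[OF bl1, of z] onorm[OF bl2, of v] unfolding oz_def ov_def by linarith
  also have "\<dots> \<le> oz * norm (z, v) + ov * norm (z, v)"
    using oz0 ov0 norm_fst_le[of z v] norm_snd_le[of v z] by (intro add_mono mult_left_mono) auto
  also have "\<dots> \<le> c * norm (z, v)"
    using assms unfolding oz_def ov_def by (simp add: distrib_right[symmetric] mult_right_mono)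
  finally show 1: "norm (blinfun_apply D (z, v)) \<le> c * norm (z, v)" .
  show c0: "c \<ge> 0" using assms oz0 ov0 unfolding oz_def ov_def by linarith
  then show "norm (blinfun_apply D (z, v)) \<le> c * (norm z + norm v)"
    using 1 norm_Pair_le[of z v] by (meson mult_left_mono order_trans)
qed

lemma mvt_lip:
  fixes f :: "'x::real_normed_vector \<Rightarrow> 'y::real_normed_vector \<Rightarrow> 'z::real_normed_vector"
  assumes d: "\<forall>x u. ((\<lambda>p. f (fst p) (snd p)) has_derivative blinfun_apply (D x u)) (at (x, u))"
    and bd: "\<forall>x u. onorm (\<lambda>z. blinfun_apply (D x u) (z, 0)) + onorm (\<lambda>v. blinfun_apply (D x u) (0, v)) \<le> c"
  shows "norm (f x u - f x' u') \<le> c * (norm (x - x') + norm (u - u'))"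
proof -
  have "norm ((\<lambda>p. f (fst p) (snd p)) (x, u) - (\<lambda>p. f (fst p) (snd p)) (x', u')) \<le> c * norm ((x, u) - (x', u'))"
  proof (rule differentiable_bound[where S=UNIV and f'="\<lambda>p. blinfun_apply (D (fst p) (snd p))"])
    fix p :: "'x \<times> 'y"
    show "((\<lambda>p. f (fst p) (snd p)) has_derivative blinfun_apply (D (fst p) (snd p))) (at p within UNIV)"
      using d by (cases p) auto
    show "onorm (blinfun_apply (D (fst p) (snd p))) \<le> c"
      by (rule onorm_bound) (use blin_bound(1,3)[OF bd[rule_format]] in auto)
  qed auto
  also have "\<dots> \<le> c * (norm (x - x') + norm (u - u'))"
  proof -
    have "c \<ge> 0" by (rule blin_bound(3)[OF bd[rule_format, of x u]])
    then show ?thesis using norm_Pair_le[of "x - x'" "u - u'"] by (simp add: mult_left_mono)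
  qed
  finally show ?thesis by simp
qed

lemma mvt_growth:
  fixes f :: "'v::real_normed_vector \<Rightarrow> 'w::real_normed_vector"
  assumes d: "\<And>p. (f has_derivative f' p) (at p)"
    and bd: "\<And>p. onorm (f' p) \<le> K * (1 + norm p)"
  shows "norm (f a - f b) \<le> K * (1 + norm a + norm b) * norm (a - b)"
proof (rule differentiable_bound[where S="closed_segment a b"])
  show "convex (closed_segment a b)" by simp
  fix p assume p: "p \<in> closed_segment a b"
  show "(f has_derivative f' p) (at p within closed_segment a b)"
    using d has_derivative_at_withinI by blast
  have "closed_segment a b \<subseteq> cball 0 (norm a + norm b)"
    by (rule closed_segment_subset) (auto simp: dist_norm)
  then have np: "norm p \<le> norm a + norm b" using p by (auto simp: dist_norm)
  have K0: "K \<ge> 0"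
  proof -
    have "0 \<le> onorm (f' p)"
      by (rule onorm_pos_le) (rule has_derivative_bounded_linear[OF d])
    then have "0 \<le> K * (1 + norm p)" using bd[of p] by linarith
    then show ?thesis by (simp add: zero_le_mult_iff) (smt (verit) norm_ge_zero)
  qed
  have "K * (1 + norm p) \<le> K * (1 + norm a + norm b)" using np K0 by (intro mult_left_mono) auto
  then show "onorm (f' p) \<le> K * (1 + norm a + norm b)"
    using bd[of p] by linarith
qed auto

lemma dir_deriv:
  fixes f :: "'v::real_normed_vector \<Rightarrow> 'w::real_normed_vector"
  assumes d: "(f has_derivative f') (at a)"
  shows "((\<lambda>t. (f (a + t *\<^sub>R h) - f a) /\<^sub>R t) \<longlongrightarrow> f' h) (at (0::real))"
proof -
  have lin: "bounded_linear f'" using has_derivative_bounded_linear[OF d] .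
  have d1: "((\<lambda>t. a + t *\<^sub>R h) has_derivative (\<lambda>t. t *\<^sub>R h)) (at (0::real))"
    by (auto intro!: derivative_eq_intros)
  have "((f \<circ> (\<lambda>t. a + t *\<^sub>R h)) has_derivative (f' \<circ> (\<lambda>t. t *\<^sub>R h))) (at 0)"
    by (rule diff_chain_at[OF d1]) (simp add: d)
  then have "((\<lambda>y. ((f (a + y *\<^sub>R h) - f a) - f' (y *\<^sub>R h)) /\<^sub>R norm y) \<longlongrightarrow> 0) (at 0)"
    unfolding has_derivative_at_within by (simp add: comp_def)
  then have L0: "((\<lambda>y. norm (((f (a + y *\<^sub>R h) - f a) - f' (y *\<^sub>R h)) /\<^sub>R norm y)) \<longlongrightarrow> 0) (at 0)"
    by (rule tendsto_norm_zero)
  have e: "f' (y *\<^sub>R h) = y *\<^sub>R f' h" for y using lin by (simp add: linear_simps)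
  have L: "((\<lambda>y. norm (((f (a + y *\<^sub>R h) - f a) - y *\<^sub>R f' h) /\<^sub>R norm y)) \<longlongrightarrow> 0) (at 0)"
    using L0 unfolding e .
  have "((\<lambda>t. norm ((f (a + t *\<^sub>R h) - f a) /\<^sub>R t - f' h)) \<longlongrightarrow> 0) (at (0::real))"
  proof (rule Lim_transform_eventually[OF L])
    show "\<forall>\<^sub>F y in at 0. norm (((f (a + y *\<^sub>R h) - f a) - y *\<^sub>R f' h) /\<^sub>R norm y) = norm ((f (a + y *\<^sub>R h) - f a) /\<^sub>R y - f' h)"
    proof (rule eventually_at_filter[THEN iffD2], rule always_eventually, intro allI impI)
      fix y :: real assume "y \<noteq> 0"
      then have "(f (a + y *\<^sub>R h) - f a) /\<^sub>R y - f' h = (1 / y) *\<^sub>R ((f (a + y *\<^sub>R h) - f a) - y *\<^sub>R f' h)"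
        by (simp add: scaleR_diff_right divide_inverse_commute)
      then show "norm (((f (a + y *\<^sub>R h) - f a) - y *\<^sub>R f' h) /\<^sub>R norm y) = norm ((f (a + y *\<^sub>R h) - f a) /\<^sub>R y - f' h)"
        by (simp add: divide_inverse mult.commute)
    qed
  qed
  then show ?thesis
    by (rule LIM_zero_cancel[OF tendsto_norm_zero_cancel])
qed

lemma dct_at0:
  fixes s :: "real \<Rightarrow> 'a \<Rightarrow> real"
  assumes meas: "\<And>t. s t \<in> borel_measurable M" and h: "integrable M h"
    and lim: "\<And>\<omega>. \<omega> \<in> space M \<Longrightarrow> ((\<lambda>t. s t \<omega>) \<longlongrightarrow> 0) (at 0)"
    and bnd: "\<And>t \<omega>. t \<noteq> 0 \<Longrightarrow> \<bar>t\<bar> < 1 \<Longrightarrow> \<omega> \<in> space M \<Longrightarrow> \<bar>s t \<omega>\<bar> \<le> h \<omega>"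
  shows "((\<lambda>t. \<integral>\<omega>. s t \<omega> \<partial>M) \<longlongrightarrow> 0) (at 0)"
  unfolding tendsto_at_iff_sequentially
proof (intro allI impI)
  fix X :: "nat \<Rightarrow> real"
  assume X0: "\<forall>i. X i \<in> UNIV - {0}" and X: "X \<longlonglongrightarrow> 0"
  obtain N0 where N0: "\<And>n. n \<ge> N0 \<Longrightarrow> \<bar>X n\<bar> < 1"
    using LIMSEQ_D[OF X, of 1] by auto
  have "(\<lambda>n. \<integral>\<omega>. s (X (n + N0)) \<omega> \<partial>M) \<longlonglongrightarrow> (\<integral>\<omega>. 0 \<partial>M)"
  proof (rule integral_dominated_convergence[where w=h])
    show "(\<lambda>\<omega>. 0::real) \<in> borel_measurable M" by simp
    show "\<And>n. s (X (n + N0)) \<in> borel_measurable M" by (rule meas)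
    show "integrable M h" by (rule h)
    show "AE x in M. (\<lambda>n. s (X (n + N0)) x) \<longlonglongrightarrow> 0"
    proof (rule AE_I2)
      fix x assume x: "x \<in> space M"
      have X': "(\<lambda>n. X (n + N0)) \<longlonglongrightarrow> 0" using LIMSEQ_ignore_initial_segment[OF X] .
      have "filterlim (\<lambda>n. X (n + N0)) (at 0) sequentially"
        using X' X0 by (auto simp: filterlim_at intro!: always_eventually)
      then show "(\<lambda>n. s (X (n + N0)) x) \<longlonglongrightarrow> 0"
        by (rule filterlim_compose[OF lim[OF x]])
    qed
    show "AE x in M. norm (s (X (n + N0)) x) \<le> h x" for n
      using bnd[of "X (n + N0)"] X0 N0[of "n + N0"] by (intro AE_I2) auto
  qed
  then have "(\<lambda>n. \<integral>\<omega>. s (X (n + N0)) \<omega> \<partial>M) \<longlonglongrightarrow> 0" by simp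
  then show "((\<lambda>t. \<integral>\<omega>. s t \<omega> \<partial>M) \<circ> X) \<longlonglongrightarrow> 0"
    unfolding comp_def by (rule LIMSEQ_offset)
qed

lemma cont_of_deriv:
  assumes "\<forall>x u. ((\<lambda>p. F (fst p) (snd p)) has_derivative blinfun_apply (D x u)) (at (x, u))"
  shows "continuous_on UNIV (\<lambda>p. F (fst p) (snd p))"
proof (rule continuous_at_imp_continuous_on, intro ballI)
  fix p :: "'a \<times> 'b" show "isCont (\<lambda>p. F (fst p) (snd p)) p"
    using has_derivative_continuous assms by (cases p) blast
qed

lemma comp_meas:
  fixes F :: "'x::euclidean_space \<Rightarrow> 'y::euclidean_space \<Rightarrow> 'z::euclidean_space"
  assumes "continuous_on UNIV (\<lambda>p. F (fst p) (snd p))" "x \<in> borel_measurable S" "u \<in> borel_measurable S"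
  shows "(\<lambda>\<omega>. F (x \<omega>) (u \<omega>)) \<in> borel_measurable S"
  using borel_measurable_continuous_Pair[OF assms(2,3) assms(1)] .

lemma pair_meas:
  fixes x :: "'a \<Rightarrow> 'x::euclidean_space" and u :: "'a \<Rightarrow> 'y::euclidean_space"
  assumes "x \<in> borel_measurable S" "u \<in> borel_measurable S"
  shows "(\<lambda>\<omega>. (x \<omega>, u \<omega>)) \<in> borel_measurable S"
  by (rule borel_measurable_continuous_Pair[OF assms, where H=Pair]) (simp add: continuous_on_id)

lemma Dcomp_meas:
  fixes D :: "'x::euclidean_space \<Rightarrow> 'y::euclidean_space \<Rightarrow> ('x \<times> 'y) \<Rightarrow>\<^sub>L 'z::euclidean_space"
  assumes C: "continuous_on UNIV (\<lambda>p. D (fst p) (snd p))"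
    and m: "x \<in> borel_measurable S" "u \<in> borel_measurable S" "z \<in> borel_measurable S" "v \<in> borel_measurable S"
  shows "(\<lambda>\<omega>. blinfun_apply (D (x \<omega>) (u \<omega>)) (z \<omega>, v \<omega>)) \<in> borel_measurable S"
proof -
  have c: "continuous_on UNIV (\<lambda>q. blinfun_apply (D (fst (fst q)) (snd (fst q))) (snd q))"
  proof (rule blinfun.continuous_on)
    show "continuous_on UNIV (\<lambda>q::('x \<times> 'y) \<times> ('x \<times> 'y). D (fst (fst q)) (snd (fst q)))"
      using continuous_on_compose2[OF C continuous_on_fst[OF continuous_on_id]] by auto
    show "continuous_on UNIV (\<lambda>q::('x \<times> 'y) \<times> ('x \<times> 'y). snd q)"
      by (intro continuous_intros)
  qed
  show ?thesis
    using borel_measurable_continuous_Pair[OF pair_meas[OF m(1,2)] pair_meas[OF m(3,4)] c] by simp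
qed

lemma diff_L2:
  fixes F :: "'x::euclidean_space \<Rightarrow> 'y::euclidean_space \<Rightarrow> 'z::euclidean_space"
  assumes d: "\<forall>x u. ((\<lambda>p. F (fst p) (snd p)) has_derivative blinfun_apply (D x u)) (at (x, u))"
    and bd: "\<forall>x u. onorm (\<lambda>z. blinfun_apply (D x u) (z, 0)) + onorm (\<lambda>v. blinfun_apply (D x u) (0, v)) \<le> c"
    and mS: "x \<in> borel_measurable S" "u \<in> borel_measurable S" "x' \<in> borel_measurable S" "u' \<in> borel_measurable S"
    and L: "x \<in> L2 M M" "u \<in> L2 M M" "x' \<in> L2 M M" "u' \<in> L2 M M"
  shows "(\<lambda>\<omega>. F (x \<omega>) (u \<omega>) - F (x' \<omega>) (u' \<omega>)) \<in> borel_measurable S"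
    and "(\<lambda>\<omega>. F (x \<omega>) (u \<omega>) - F (x' \<omega>) (u' \<omega>)) \<in> L2 M M"
    and "L2norm M (\<lambda>\<omega>. F (x \<omega>) (u \<omega>) - F (x' \<omega>) (u' \<omega>))
          \<le> c * L2norm M (\<lambda>\<omega>. x \<omega> - x' \<omega>) + c * L2norm M (\<lambda>\<omega>. u \<omega> - u' \<omega>)"
proof -
  have C: "continuous_on UNIV (\<lambda>p. F (fst p) (snd p))" by (rule cont_of_deriv[OF d])
  have c0: "c \<ge> 0" using blin_bound(3)[OF bd[rule_format]] by blast
  show "(\<lambda>\<omega>. F (x \<omega>) (u \<omega>) - F (x' \<omega>) (u' \<omega>)) \<in> borel_measurable S"
    using comp_meas[OF C mS(1,2)] comp_meas[OF C mS(3,4)] by (rule borel_measurable_diff)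
  have mM: "x \<in> borel_measurable M" "u \<in> borel_measurable M" "x' \<in> borel_measurable M" "u' \<in> borel_measurable M"
    using L by (auto simp: L2_def)
  have m: "(\<lambda>\<omega>. F (x \<omega>) (u \<omega>) - F (x' \<omega>) (u' \<omega>)) \<in> borel_measurable M"
    using comp_meas[OF C mM(1,2)] comp_meas[OF C mM(3,4)] by (rule borel_measurable_diff)
  have pw: "norm (F (x \<omega>) (u \<omega>) - F (x' \<omega>) (u' \<omega>)) \<le> c * norm (x \<omega> - x' \<omega>) + c * norm (u \<omega> - u' \<omega>)" for \<omega>
    using mvt_lip[OF d bd, of "x \<omega>" "u \<omega>" "x' \<omega>" "u' \<omega>"] by (simp add: distrib_left)
  note r = L2_lin2[OF m L2_diff(1)[OF L(1,3)] L2_diff(1)[OF L(2,4)] c0 c0 pw]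
  show "(\<lambda>\<omega>. F (x \<omega>) (u \<omega>) - F (x' \<omega>) (u' \<omega>)) \<in> L2 M M" by (rule r(1))
  show "L2norm M (\<lambda>\<omega>. F (x \<omega>) (u \<omega>) - F (x' \<omega>) (u' \<omega>))
          \<le> c * L2norm M (\<lambda>\<omega>. x \<omega> - x' \<omega>) + c * L2norm M (\<lambda>\<omega>. u \<omega> - u' \<omega>)" by (rule r(2))
qed

lemma D_L2:
  fixes D :: "'x::euclidean_space \<Rightarrow> 'y::euclidean_space \<Rightarrow> ('x \<times> 'y) \<Rightarrow>\<^sub>L 'z::euclidean_space"
  assumes bd: "\<forall>x u. onorm (\<lambda>z. blinfun_apply (D x u) (z, 0)) + onorm (\<lambda>v. blinfun_apply (D x u) (0, v)) \<le> c"
    and C: "continuous_on UNIV (\<lambda>p. D (fst p) (snd p))"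
    and mS: "x \<in> borel_measurable S" "u \<in> borel_measurable S" "z \<in> borel_measurable S" "v \<in> borel_measurable S"
    and L: "x \<in> L2 M M" "u \<in> L2 M M" "z \<in> L2 M M" "v \<in> L2 M M"
  shows "(\<lambda>\<omega>. blinfun_apply (D (x \<omega>) (u \<omega>)) (z \<omega>, v \<omega>)) \<in> borel_measurable S"
    and "(\<lambda>\<omega>. blinfun_apply (D (x \<omega>) (u \<omega>)) (z \<omega>, v \<omega>)) \<in> L2 M M"
    and "L2norm M (\<lambda>\<omega>. blinfun_apply (D (x \<omega>) (u \<omega>)) (z \<omega>, v \<omega>)) \<le> c * L2norm M z + c * L2norm M v"
proof -
  have c0: "c \<ge> 0" using blin_bound(3)[OF bd[rule_format]] by blast
  show "(\<lambda>\<omega>. blinfun_apply (D (x \<omega>) (u \<omega>)) (z \<omega>, v \<omega>)) \<in> borel_measurable S"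
    by (rule Dcomp_meas[OF C mS])
  have mM: "x \<in> borel_measurable M" "u \<in> borel_measurable M" "z \<in> borel_measurable M" "v \<in> borel_measurable M"
    using L by (auto simp: L2_def)
  have m: "(\<lambda>\<omega>. blinfun_apply (D (x \<omega>) (u \<omega>)) (z \<omega>, v \<omega>)) \<in> borel_measurable M"
    by (rule Dcomp_meas[OF C mM])
  have pw: "norm (blinfun_apply (D (x \<omega>) (u \<omega>)) (z \<omega>, v \<omega>)) \<le> c * norm (z \<omega>) + c * norm (v \<omega>)" for \<omega>
    using blin_bound(2)[OF bd[rule_format], of "x \<omega>" "u \<omega>" "z \<omega>" "v \<omega>"] by (simp add: distrib_left)
  note r = L2_lin2[OF m L(3) L(4) c0 c0 pw]
  show "(\<lambda>\<omega>. blinfun_apply (D (x \<omega>) (u \<omega>)) (z \<omega>, v \<omega>)) \<in> L2 M M" by (rule r(1))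
  show "L2norm M (\<lambda>\<omega>. blinfun_apply (D (x \<omega>) (u \<omega>)) (z \<omega>, v \<omega>)) \<le> c * L2norm M z + c * L2norm M v" by (rule r(2))
qed

lemma quot_L2:
  fixes F :: "'x::euclidean_space \<Rightarrow> 'y::euclidean_space \<Rightarrow> 'z::euclidean_space"
  assumes d: "\<forall>x u. ((\<lambda>p. F (fst p) (snd p)) has_derivative blinfun_apply (D x u)) (at (x, u))"
    and bd: "\<forall>x u. onorm (\<lambda>z. blinfun_apply (D x u) (z, 0)) + onorm (\<lambda>v. blinfun_apply (D x u) (0, v)) \<le> c"
    and C: "continuous_on UNIV (\<lambda>p. D (fst p) (snd p))"
    and mS: "x \<in> borel_measurable S" "u \<in> borel_measurable S" "z \<in> borel_measurable S" "v \<in> borel_measurable S"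
    and L: "x \<in> L2 M M" "u \<in> L2 M M" "z \<in> L2 M M" "v \<in> L2 M M"
  defines "Q \<equiv> \<lambda>t \<omega>. (F (x \<omega> + t *\<^sub>R z \<omega>) (u \<omega> + t *\<^sub>R v \<omega>) - F (x \<omega>) (u \<omega>)) /\<^sub>R t
                   - blinfun_apply (D (x \<omega>) (u \<omega>)) (z \<omega>, v \<omega>)"
  shows "Q t \<in> borel_measurable S" and "Q t \<in> L2 M M"
    and "((\<lambda>t. L2norm M (Q t)) \<longlongrightarrow> 0) (at 0)"
proof -
  have CF: "continuous_on UNIV (\<lambda>p. F (fst p) (snd p))" by (rule cont_of_deriv[OF d])
  have c0: "c \<ge> 0" using blin_bound(3)[OF bd[rule_format]] by blast
  have mM: "x \<in> borel_measurable M" "u \<in> borel_measurable M" "z \<in> borel_measurable M" "v \<in> borel_measurable M"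
    using L by (auto simp: L2_def)
  have meas: "Q t \<in> borel_measurable T"
    if "x \<in> borel_measurable T" "u \<in> borel_measurable T" "z \<in> borel_measurable T" "v \<in> borel_measurable T" for t T
  proof -
    have a1: "(\<lambda>\<omega>. x \<omega> + t *\<^sub>R z \<omega>) \<in> borel_measurable T" using that by measurable
    have a2: "(\<lambda>\<omega>. u \<omega> + t *\<^sub>R v \<omega>) \<in> borel_measurable T" using that by measurable
    show ?thesis unfolding Q_def
      by (intro borel_measurable_diff borel_measurable_scaleR borel_measurable_const
          comp_meas[OF CF a1 a2] comp_meas[OF CF that(1,2)] Dcomp_meas[OF C that])
  qed
  show "Q t \<in> borel_measurable S" for t by (rule meas[OF mS])
  have pw: "norm (Q t \<omega>) \<le> (2 * c) * norm (z \<omega>) + (2 * c) * norm (v \<omega>)" for t \<omega>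
  proof -
    have Db: "norm (blinfun_apply (D (x \<omega>) (u \<omega>)) (z \<omega>, v \<omega>)) \<le> c * (norm (z \<omega>) + norm (v \<omega>))"
      by (rule blin_bound(2)[OF bd[rule_format]])
    have Fb: "norm ((F (x \<omega> + t *\<^sub>R z \<omega>) (u \<omega> + t *\<^sub>R v \<omega>) - F (x \<omega>) (u \<omega>)) /\<^sub>R t) \<le> c * (norm (z \<omega>) + norm (v \<omega>))"
    proof (cases "t = 0")
      case True then show ?thesis using c0 by simp
    next
      case False
      have "norm (F (x \<omega> + t *\<^sub>R z \<omega>) (u \<omega> + t *\<^sub>R v \<omega>) - F (x \<omega>) (u \<omega>)) \<le> c * (norm (t *\<^sub>R z \<omega>) + norm (t *\<^sub>R v \<omega>))"
        using mvt_lip[OF d bd, of "x \<omega> + t *\<^sub>R z \<omega>" "u \<omega> + t *\<^sub>R v \<omega>" "x \<omega>" "u \<omega>"] by simp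
      also have "\<dots> = \<bar>t\<bar> * (c * (norm (z \<omega>) + norm (v \<omega>)))" by (simp add: algebra_simps)
      finally have H: "norm (F (x \<omega> + t *\<^sub>R z \<omega>) (u \<omega> + t *\<^sub>R v \<omega>) - F (x \<omega>) (u \<omega>)) \<le> \<bar>t\<bar> * (c * (norm (z \<omega>) + norm (v \<omega>)))" .
      have "inverse \<bar>t\<bar> * norm (F (x \<omega> + t *\<^sub>R z \<omega>) (u \<omega> + t *\<^sub>R v \<omega>) - F (x \<omega>) (u \<omega>))
          \<le> inverse \<bar>t\<bar> * (\<bar>t\<bar> * (c * (norm (z \<omega>) + norm (v \<omega>))))"
        by (rule mult_left_mono[OF H]) simp
      also have "\<dots> = c * (norm (z \<omega>) + norm (v \<omega>))" using False by simp
      finally show ?thesis by simp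
    qed
    have "norm (Q t \<omega>) \<le> c * (norm (z \<omega>) + norm (v \<omega>)) + c * (norm (z \<omega>) + norm (v \<omega>))"
      unfolding Q_def using norm_triangle_ineq4 Db Fb by (smt (verit))
    then show ?thesis by (simp add: algebra_simps)
  qed
  have c20: "2 * c \<ge> 0" using c0 by simp
  show QL: "Q t \<in> L2 M M" for t
    by (rule L2_lin2(1)[OF meas[OF mM] L(3) L(4) c20 c20 pw])
  define G where "G = (\<lambda>\<omega>. (2 * c) *\<^sub>R norm (z \<omega>) + (2 * c) *\<^sub>R norm (v \<omega>))"
  have GL: "G \<in> L2 M M" unfolding G_def
    by (intro L2_add(1) L2_scale(1) L2_norm L)
  have "((\<lambda>t. \<integral>\<omega>. (norm (Q t \<omega>))\<^sup>2 \<partial>M) \<longlongrightarrow> 0) (at 0)"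
  proof (rule dct_at0[where h="\<lambda>\<omega>. (norm (G \<omega>))\<^sup>2"])
    show "(\<lambda>\<omega>. (norm (Q t \<omega>))\<^sup>2) \<in> borel_measurable M" for t
      using meas[OF mM, of t] by measurable
    show "integrable M (\<lambda>\<omega>. (norm (G \<omega>))\<^sup>2)" using GL by (simp add: L2_def)
    fix \<omega> assume "\<omega> \<in> space M"
    have "((\<lambda>t. ((\<lambda>p. F (fst p) (snd p)) ((x \<omega>, u \<omega>) + t *\<^sub>R (z \<omega>, v \<omega>)) - (\<lambda>p. F (fst p) (snd p)) (x \<omega>, u \<omega>)) /\<^sub>R t)
        \<longlongrightarrow> blinfun_apply (D (x \<omega>) (u \<omega>)) (z \<omega>, v \<omega>)) (at 0)"
      by (rule dir_deriv) (use d in blast)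
    then have "((\<lambda>t. Q t \<omega>) \<longlongrightarrow> 0) (at 0)"
      unfolding Q_def by (intro LIM_zero) simp
    then have "((\<lambda>t. norm (Q t \<omega>)) \<longlongrightarrow> 0) (at 0)" by (rule tendsto_norm_zero)
    then show "((\<lambda>t. (norm (Q t \<omega>))\<^sup>2) \<longlongrightarrow> 0) (at 0)"
      using tendsto_power[of "\<lambda>t. norm (Q t \<omega>)" 0 "at 0" 2] by simp
  next
    fix t :: real and \<omega>
    have "norm (Q t \<omega>) \<le> norm (G \<omega>)" using pw[of t \<omega>] c0 by (simp add: G_def)
    then have "(norm (Q t \<omega>))\<^sup>2 \<le> (norm (G \<omega>))\<^sup>2" by (rule power_mono) simp
    then show "\<bar>(norm (Q t \<omega>))\<^sup>2\<bar> \<le> (norm (G \<omega>))\<^sup>2" by simp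
  qed
  then have "((\<lambda>t. sqrt (\<integral>\<omega>. (norm (Q t \<omega>))\<^sup>2 \<partial>M)) \<longlongrightarrow> sqrt 0) (at 0)"
    by (rule tendsto_real_sqrt)
  then show "((\<lambda>t. L2norm M (Q t)) \<longlongrightarrow> 0) (at 0)" by (simp add: L2norm_def)
qed

lemma L2_pair:
  fixes x :: "'a \<Rightarrow> 'x::euclidean_space" and u :: "'a \<Rightarrow> 'y::euclidean_space"
  assumes "x \<in> L2 M M" "u \<in> L2 M M"
  shows "(\<lambda>\<omega>. (x \<omega>, u \<omega>)) \<in> L2 M M" and "L2norm M (\<lambda>\<omega>. (x \<omega>, u \<omega>)) \<le> L2norm M x + L2norm M u"
proof -
  have m: "(\<lambda>\<omega>. (x \<omega>, u \<omega>)) \<in> borel_measurable M"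
    using assms by (intro pair_meas) (auto simp: L2_def)
  have pw: "norm (x \<omega>, u \<omega>) \<le> 1 * norm (x \<omega>) + 1 * norm (u \<omega>)" for \<omega>
    using norm_Pair_le by simp
  note r = L2_lin2[OF m assms(1) assms(2) _ _ pw]
  show "(\<lambda>\<omega>. (x \<omega>, u \<omega>)) \<in> L2 M M" using r by simp
  show "L2norm M (\<lambda>\<omega>. (x \<omega>, u \<omega>)) \<le> L2norm M x + L2norm M u" using r by simp
qed

context prob_space
begin

lemma L2_const: "(\<lambda>\<omega>. c) \<in> L2 M M" and L2norm_const: "L2norm M (\<lambda>\<omega>. c) = norm c"
  by (auto simp: L2_def L2norm_def prob_space)

lemma L2_aff:
  fixes a :: "'a \<Rightarrow> 'v::euclidean_space"
  assumes a: "a \<in> L2 M M"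
  shows "(\<lambda>\<omega>. 1 + norm (a \<omega>)) \<in> L2 M M" and "L2norm M (\<lambda>\<omega>. 1 + norm (a \<omega>)) \<le> 1 + L2norm M a"
  using L2_add[OF L2_const[of "1::real"] L2_norm[OF a]] by (auto simp: L2norm_const L2norm_norm)

lemma L2_aff2:
  fixes a :: "'a \<Rightarrow> 'v::euclidean_space" and b :: "'a \<Rightarrow> 'w::euclidean_space"
  assumes a: "a \<in> L2 M M" and b: "b \<in> L2 M M"
  shows "(\<lambda>\<omega>. 1 + norm (a \<omega>) + norm (b \<omega>)) \<in> L2 M M"
    and "L2norm M (\<lambda>\<omega>. 1 + norm (a \<omega>) + norm (b \<omega>)) \<le> 1 + L2norm M a + L2norm M b"
  using L2_add[OF L2_aff(1)[OF a] L2_norm[OF b]] L2_aff(2)[OF a] by (auto simp: L2norm_norm)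

lemma int_prod:
  fixes g h :: "'a \<Rightarrow> real"
  assumes g: "g \<in> L2 M M" and h: "h \<in> L2 M M" and m: "f \<in> borel_measurable M"
    and pw: "\<And>\<omega>. \<omega> \<in> space M \<Longrightarrow> \<bar>f \<omega>\<bar> \<le> K * (g \<omega> * h \<omega>)"
  shows "integrable M f" and "(\<integral>\<omega>. \<bar>f \<omega>\<bar> \<partial>M) \<le> \<bar>K\<bar> * (L2norm M g * L2norm M h)"
proof -
  note cs = L2_CS[OF g h]
  have i2: "integrable M (\<lambda>\<omega>. \<bar>K\<bar> * \<bar>g \<omega> * h \<omega>\<bar>)" using cs(1) by auto
  have pw': "\<bar>f \<omega>\<bar> \<le> \<bar>K\<bar> * \<bar>g \<omega> * h \<omega>\<bar>" if "\<omega> \<in> space M" for \<omega>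
  proof -
    have "K * (g \<omega> * h \<omega>) \<le> \<bar>K\<bar> * \<bar>g \<omega> * h \<omega>\<bar>" by (metis abs_ge_self abs_mult)
    then show ?thesis using pw[of \<omega>] that by linarith
  qed
  show fi: "integrable M f"
    by (rule Bochner_Integration.integrable_bound[OF i2 m]) (auto intro!: AE_I2 simp: pw')
  have "(\<integral>\<omega>. \<bar>f \<omega>\<bar> \<partial>M) \<le> (\<integral>\<omega>. \<bar>K\<bar> * \<bar>g \<omega> * h \<omega>\<bar> \<partial>M)"
    by (rule integral_mono[OF integrable_abs[OF fi] i2 pw'])
  also have "\<dots> = \<bar>K\<bar> * (\<integral>\<omega>. \<bar>g \<omega> * h \<omega>\<bar> \<partial>M)" by simp
  also have "\<dots> \<le> \<bar>K\<bar> * (L2norm M g * L2norm M h)"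
    by (rule mult_left_mono[OF cs(2)]) simp
  finally show "(\<integral>\<omega>. \<bar>f \<omega>\<bar> \<partial>M) \<le> \<bar>K\<bar> * (L2norm M g * L2norm M h)" .
qed


context
  fixes f :: "'v::euclidean_space \<Rightarrow> real" and Df :: "'v \<Rightarrow> 'v \<Rightarrow>\<^sub>L real" and K :: real
  assumes d: "\<forall>p. (f has_derivative blinfun_apply (Df p)) (at p)" and C: "continuous_on UNIV Df"
    and bd: "\<forall>p. norm (Df p) \<le> K * (1 + norm p)" and gr: "\<forall>p. \<bar>f p\<bar> \<le> K * (1 + norm p)\<^sup>2"
begin

lemma K0: "K \<ge> 0"
proof -
  have "0 \<le> K * (1 + norm (0::'v))" using bd[rule_format, of 0] norm_ge_zero[of "Df 0"] by linarith
  then show ?thesis by simp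
qed

lemma f_cont: "continuous_on UNIV f"
  by (rule continuous_at_imp_continuous_on) (use d has_derivative_continuous in blast)

lemma f_meas: "a \<in> borel_measurable S \<Longrightarrow> (\<lambda>\<omega>. f (a \<omega>)) \<in> borel_measurable S"
  by (rule measurable_compose[OF _ borel_measurable_continuous_onI[OF f_cont]])

lemma Df_meas: "a \<in> borel_measurable S \<Longrightarrow> h \<in> borel_measurable S \<Longrightarrow> (\<lambda>\<omega>. blinfun_apply (Df (a \<omega>)) (h \<omega>)) \<in> borel_measurable S"
proof -
  assume am: "a \<in> borel_measurable S" and hm: "h \<in> borel_measurable S"
  have c: "continuous_on UNIV (\<lambda>q::'v \<times> 'v. blinfun_apply (Df (fst q)) (snd q))"
  proof (rule blinfun.continuous_on)
    show "continuous_on UNIV (\<lambda>q::'v \<times> 'v. Df (fst q))"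
      using continuous_on_compose2[OF C continuous_on_fst[OF continuous_on_id]] by auto
    show "continuous_on UNIV (\<lambda>q::'v \<times> 'v. snd q)" by (intro continuous_intros)
  qed
  show ?thesis using borel_measurable_continuous_Pair[OF am hm c] by simp
qed

lemma f_int:
  assumes a: "a \<in> L2 M M"
  shows "integrable M (\<lambda>\<omega>. f (a \<omega>))"
proof -
  have am: "a \<in> borel_measurable M" using a by (simp add: L2_def)
  show ?thesis
  proof (rule int_prod(1)[OF L2_aff(1)[OF a] L2_aff(1)[OF a] f_meas[OF am]])
    fix \<omega> show "\<bar>f (a \<omega>)\<bar> \<le> K * ((1 + norm (a \<omega>)) * (1 + norm (a \<omega>)))"
      using gr[rule_format, of "a \<omega>"] by (simp add: power2_eq_square)
  qed
qed

lemma f_lip: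
  assumes a: "a \<in> L2 M M" and a': "a' \<in> L2 M M"
  shows "\<bar>(\<integral>\<omega>. f (a \<omega>) \<partial>M) - (\<integral>\<omega>. f (a' \<omega>) \<partial>M)\<bar>
      \<le> K * ((1 + L2norm M a + L2norm M a') * L2norm M (\<lambda>\<omega>. a \<omega> - a' \<omega>))"
proof -
  have am: "a \<in> borel_measurable M" "a' \<in> borel_measurable M" using a a' by (auto simp: L2_def)
  have m: "(\<lambda>\<omega>. f (a \<omega>) - f (a' \<omega>)) \<in> borel_measurable M"
    using f_meas[OF am(1)] f_meas[OF am(2)] by (rule borel_measurable_diff)
  have g: "(\<lambda>\<omega>. 1 + norm (a \<omega>) + norm (a' \<omega>)) \<in> L2 M M" by (rule L2_aff2(1)[OF a a'])
  have h: "(\<lambda>\<omega>. norm (a \<omega> - a' \<omega>)) \<in> L2 M M" by (rule L2_norm[OF L2_diff(1)[OF a a']])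
  have pw: "\<bar>f (a \<omega>) - f (a' \<omega>)\<bar> \<le> K * ((1 + norm (a \<omega>) + norm (a' \<omega>)) * norm (a \<omega> - a' \<omega>))" for \<omega>
  proof -
    have "norm (f (a \<omega>) - f (a' \<omega>)) \<le> K * (1 + norm (a \<omega>) + norm (a' \<omega>)) * norm (a \<omega> - a' \<omega>)"
    proof (rule mvt_growth[where f'="\<lambda>p. blinfun_apply (Df p)"])
      show "\<And>p. (f has_derivative blinfun_apply (Df p)) (at p)" using d by blast
      show "\<And>p. onorm (blinfun_apply (Df p)) \<le> K * (1 + norm p)" using bd by (simp add: norm_blinfun.rep_eq[symmetric])
    qed
    then show ?thesis by (simp add: mult.assoc)
  qed
  note ip = int_prod[OF g h m pw]
  have "\<bar>(\<integral>\<omega>. f (a \<omega>) \<partial>M) - (\<integral>\<omega>. f (a' \<omega>) \<partial>M)\<bar> = \<bar>\<integral>\<omega>. f (a \<omega>) - f (a' \<omega>) \<partial>M\<bar>"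
    using f_int[OF a] f_int[OF a'] by simp
  also have "\<dots> \<le> (\<integral>\<omega>. \<bar>f (a \<omega>) - f (a' \<omega>)\<bar> \<partial>M)" by (rule integral_abs_bound)
  also have "\<dots> \<le> \<bar>K\<bar> * (L2norm M (\<lambda>\<omega>. 1 + norm (a \<omega>) + norm (a' \<omega>)) * L2norm M (\<lambda>\<omega>. norm (a \<omega> - a' \<omega>)))"
    by (rule ip(2))
  also have "\<dots> \<le> K * ((1 + L2norm M a + L2norm M a') * L2norm M (\<lambda>\<omega>. a \<omega> - a' \<omega>))"
    using K0 L2_aff2(2)[OF a a'] by (auto simp: L2norm_norm intro!: mult_left_mono mult_right_mono L2norm_nonneg)
  finally show ?thesis .
qed

lemma Df_int:
  assumes a: "a \<in> L2 M M" and h: "h \<in> L2 M M"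
  shows "integrable M (\<lambda>\<omega>. blinfun_apply (Df (a \<omega>)) (h \<omega>))"
    and "\<bar>\<integral>\<omega>. blinfun_apply (Df (a \<omega>)) (h \<omega>) \<partial>M\<bar> \<le> K * ((1 + L2norm M a) * L2norm M h)"
proof -
  have am: "a \<in> borel_measurable M" "h \<in> borel_measurable M" using a h by (auto simp: L2_def)
  have pw: "\<bar>blinfun_apply (Df (a \<omega>)) (h \<omega>)\<bar> \<le> K * ((1 + norm (a \<omega>)) * norm (h \<omega>))" for \<omega>
  proof -
    have "\<bar>blinfun_apply (Df (a \<omega>)) (h \<omega>)\<bar> \<le> norm (Df (a \<omega>)) * norm (h \<omega>)"
      using norm_blinfun[of "Df (a \<omega>)" "h \<omega>"] by simp
    also have "\<dots> \<le> K * (1 + norm (a \<omega>)) * norm (h \<omega>)"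
      by (rule mult_right_mono) (use bd in auto)
    finally show ?thesis by (simp add: mult.assoc)
  qed
  note ip = int_prod[OF L2_aff(1)[OF a] L2_norm[OF h] Df_meas[OF am] pw]
  show "integrable M (\<lambda>\<omega>. blinfun_apply (Df (a \<omega>)) (h \<omega>))" by (rule ip(1))
  have "\<bar>\<integral>\<omega>. blinfun_apply (Df (a \<omega>)) (h \<omega>) \<partial>M\<bar> \<le> (\<integral>\<omega>. \<bar>blinfun_apply (Df (a \<omega>)) (h \<omega>)\<bar> \<partial>M)"
    by (rule integral_abs_bound)
  also have "\<dots> \<le> \<bar>K\<bar> * (L2norm M (\<lambda>\<omega>. 1 + norm (a \<omega>)) * L2norm M (\<lambda>\<omega>. norm (h \<omega>)))" by (rule ip(2))
  also have "\<dots> \<le> K * ((1 + L2norm M a) * L2norm M h)"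
    using K0 L2_aff(2)[OF a] by (auto simp: L2norm_norm intro!: mult_left_mono mult_right_mono L2norm_nonneg)
  finally show "\<bar>\<integral>\<omega>. blinfun_apply (Df (a \<omega>)) (h \<omega>) \<partial>M\<bar> \<le> K * ((1 + L2norm M a) * L2norm M h)" .
qed

lemma f_dir:
  assumes a: "a \<in> L2 M M" and h: "h \<in> L2 M M"
  shows "((\<lambda>t. \<integral>\<omega>. (f (a \<omega> + t *\<^sub>R h \<omega>) - f (a \<omega>)) / t - blinfun_apply (Df (a \<omega>)) (h \<omega>) \<partial>M) \<longlongrightarrow> 0) (at 0)"
proof -
  have am: "a \<in> borel_measurable M" "h \<in> borel_measurable M" using a h by (auto simp: L2_def)
  define g where "g = (\<lambda>\<omega>. 1 + norm (a \<omega>) + norm (h \<omega>) + norm (a \<omega>))"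
  have gL: "g \<in> L2 M M" unfolding g_def by (rule L2_add(1)[OF L2_aff2(1)[OF a h] L2_norm[OF a]])
  have Hi: "integrable M (\<lambda>\<omega>. 2 * K * (g \<omega> * norm (h \<omega>)))"
    using L2_CS(1)[OF gL L2_norm[OF h]] by simp
  show ?thesis
  proof (rule dct_at0[OF _ Hi])
    fix t :: real
    have m1: "(\<lambda>\<omega>. a \<omega> + t *\<^sub>R h \<omega>) \<in> borel_measurable M" using am by measurable
    show "(\<lambda>\<omega>. (f (a \<omega> + t *\<^sub>R h \<omega>) - f (a \<omega>)) / t - blinfun_apply (Df (a \<omega>)) (h \<omega>)) \<in> borel_measurable M"
      by (intro borel_measurable_diff borel_measurable_divide f_meas[OF m1] f_meas[OF am(1)] Df_meas[OF am] borel_measurable_const)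
  next
    fix \<omega> assume "\<omega> \<in> space M"
    have "((\<lambda>t. (f (a \<omega> + t *\<^sub>R h \<omega>) - f (a \<omega>)) /\<^sub>R t) \<longlongrightarrow> blinfun_apply (Df (a \<omega>)) (h \<omega>)) (at 0)"
      by (rule dir_deriv) (use d in blast)
    then have "((\<lambda>t. (f (a \<omega> + t *\<^sub>R h \<omega>) - f (a \<omega>)) / t) \<longlongrightarrow> blinfun_apply (Df (a \<omega>)) (h \<omega>)) (at 0)"
      by (simp add: divide_inverse mult.commute)
    then show "((\<lambda>t. (f (a \<omega> + t *\<^sub>R h \<omega>) - f (a \<omega>)) / t - blinfun_apply (Df (a \<omega>)) (h \<omega>)) \<longlongrightarrow> 0) (at 0)"
      by (rule LIM_zero)
  next
    fix t :: real and \<omega> assume t0: "t \<noteq> 0" and t1: "\<bar>t\<bar> < 1" and \<omega>: "\<omega> \<in> space M"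
    have nth: "norm (a \<omega> + t *\<^sub>R h \<omega>) \<le> norm (a \<omega>) + norm (h \<omega>)"
    proof -
      have "norm (a \<omega> + t *\<^sub>R h \<omega>) \<le> norm (a \<omega>) + \<bar>t\<bar> * norm (h \<omega>)" using norm_triangle_ineq[of "a \<omega>" "t *\<^sub>R h \<omega>"] by simp
      also have "\<bar>t\<bar> * norm (h \<omega>) \<le> norm (h \<omega>)" using t1 by (simp add: mult_left_le_one_le)
      finally show ?thesis by simp
    qed
    have q: "\<bar>(f (a \<omega> + t *\<^sub>R h \<omega>) - f (a \<omega>)) / t\<bar> \<le> K * (g \<omega> * norm (h \<omega>))"
    proof -
      have "norm (f (a \<omega> + t *\<^sub>R h \<omega>) - f (a \<omega>)) \<le> K * (1 + norm (a \<omega> + t *\<^sub>R h \<omega>) + norm (a \<omega>)) * norm ((a \<omega> + t *\<^sub>R h \<omega>) - a \<omega>)"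
      proof (rule mvt_growth[where f'="\<lambda>p. blinfun_apply (Df p)"])
        show "\<And>p. (f has_derivative blinfun_apply (Df p)) (at p)" using d by blast
        show "\<And>p. onorm (blinfun_apply (Df p)) \<le> K * (1 + norm p)" using bd by (simp add: norm_blinfun.rep_eq[symmetric])
      qed
      also have "\<dots> = \<bar>t\<bar> * (K * (1 + norm (a \<omega> + t *\<^sub>R h \<omega>) + norm (a \<omega>)) * norm (h \<omega>))" by simp
      also have "\<dots> \<le> \<bar>t\<bar> * (K * (g \<omega> * norm (h \<omega>)))"
        unfolding g_def using nth K0 by (intro mult_left_mono) (auto simp: mult.assoc intro!: mult_left_mono mult_right_mono)
      finally have H: "\<bar>f (a \<omega> + t *\<^sub>R h \<omega>) - f (a \<omega>)\<bar> \<le> \<bar>t\<bar> * (K * (g \<omega> * norm (h \<omega>)))" by simp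
      have "\<bar>(f (a \<omega> + t *\<^sub>R h \<omega>) - f (a \<omega>)) / t\<bar> = \<bar>f (a \<omega> + t *\<^sub>R h \<omega>) - f (a \<omega>)\<bar> / \<bar>t\<bar>" by simp
      also have "\<dots> \<le> K * (g \<omega> * norm (h \<omega>))" using H t0 by (simp add: divide_le_eq mult.commute)
      finally show ?thesis .
    qed
    have r: "\<bar>blinfun_apply (Df (a \<omega>)) (h \<omega>)\<bar> \<le> K * (g \<omega> * norm (h \<omega>))"
    proof -
      have "\<bar>blinfun_apply (Df (a \<omega>)) (h \<omega>)\<bar> \<le> norm (Df (a \<omega>)) * norm (h \<omega>)"
        using norm_blinfun[of "Df (a \<omega>)" "h \<omega>"] by simp
      also have "\<dots> \<le> K * (1 + norm (a \<omega>)) * norm (h \<omega>)"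
        by (rule mult_right_mono) (use bd in auto)
      also have "\<dots> \<le> K * (g \<omega> * norm (h \<omega>))"
        unfolding g_def using K0 by (auto simp: mult.assoc intro!: mult_left_mono mult_right_mono)
      finally show ?thesis .
    qed
    show "\<bar>(f (a \<omega> + t *\<^sub>R h \<omega>) - f (a \<omega>)) / t - blinfun_apply (Df (a \<omega>)) (h \<omega>)\<bar> \<le> 2 * K * (g \<omega> * norm (h \<omega>))"
      using q r by linarith
  qed
qed

lemma f_dir':
  assumes a: "a \<in> L2 M M" and h: "h \<in> L2 M M"
  shows "((\<lambda>t. ((\<integral>\<omega>. f (a \<omega> + t *\<^sub>R h \<omega>) \<partial>M) - (\<integral>\<omega>. f (a \<omega>) \<partial>M)) / t
            - (\<integral>\<omega>. blinfun_apply (Df (a \<omega>)) (h \<omega>) \<partial>M)) \<longlongrightarrow> 0) (at 0)"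
proof -
  have eq: "((\<integral>\<omega>. f (a \<omega> + t *\<^sub>R h \<omega>) \<partial>M) - (\<integral>\<omega>. f (a \<omega>) \<partial>M)) / t
            - (\<integral>\<omega>. blinfun_apply (Df (a \<omega>)) (h \<omega>) \<partial>M)
         = (\<integral>\<omega>. (f (a \<omega> + t *\<^sub>R h \<omega>) - f (a \<omega>)) / t - blinfun_apply (Df (a \<omega>)) (h \<omega>) \<partial>M)" for t
  proof -
    have ath: "(\<lambda>\<omega>. a \<omega> + t *\<^sub>R h \<omega>) \<in> L2 M M" by (rule L2_add(1)[OF a L2_scale(1)[OF h]])
    have i1: "integrable M (\<lambda>\<omega>. f (a \<omega> + t *\<^sub>R h \<omega>))" by (rule f_int[OF ath])
    have i2: "integrable M (\<lambda>\<omega>. f (a \<omega>))" by (rule f_int[OF a])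
    have i3: "integrable M (\<lambda>\<omega>. blinfun_apply (Df (a \<omega>)) (h \<omega>))" by (rule Df_int(1)[OF a h])
    have "(\<integral>\<omega>. (f (a \<omega> + t *\<^sub>R h \<omega>) - f (a \<omega>)) / t - blinfun_apply (Df (a \<omega>)) (h \<omega>) \<partial>M)
        = (\<integral>\<omega>. (f (a \<omega> + t *\<^sub>R h \<omega>) - f (a \<omega>)) / t \<partial>M) - (\<integral>\<omega>. blinfun_apply (Df (a \<omega>)) (h \<omega>) \<partial>M)"
      using i1 i2 i3 by (intro Bochner_Integration.integral_diff) auto
    also have "(\<integral>\<omega>. (f (a \<omega> + t *\<^sub>R h \<omega>) - f (a \<omega>)) / t \<partial>M) = (\<integral>\<omega>. f (a \<omega> + t *\<^sub>R h \<omega>) - f (a \<omega>) \<partial>M) / t"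
      by (rule integral_divide_zero)
    also have "(\<integral>\<omega>. f (a \<omega> + t *\<^sub>R h \<omega>) - f (a \<omega>) \<partial>M) = (\<integral>\<omega>. f (a \<omega> + t *\<^sub>R h \<omega>) \<partial>M) - (\<integral>\<omega>. f (a \<omega>) \<partial>M)"
      using i1 i2 by (rule Bochner_Integration.integral_diff)
    finally show ?thesis by simp
  qed
  show ?thesis unfolding eq by (rule f_dir[OF a h])
qed

end

end

lemma sum_shift_bound:
  fixes a X U :: "nat \<Rightarrow> real"
  assumes X0: "\<And>k. X k \<ge> 0" and U0: "\<And>k. U k \<ge> 0" and K0: "K \<ge> 0"
    and a0: "a 0 \<le> X 0" and aS: "\<And>j. j < N \<Longrightarrow> a (Suc j) \<le> K * (X j + U j) + X (Suc j)"
  shows "(\<Sum>k\<le>N. a k) \<le> (K + 1) * ((\<Sum>k\<le>N. X k) + (\<Sum>k<N. U k))"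
proof -
  have "(\<Sum>k\<le>N. a k) = a 0 + (\<Sum>j<N. a (Suc j))" by (simp add: sum.atMost_shift)
  also have "\<dots> \<le> X 0 + (\<Sum>j<N. K * (X j + U j) + X (Suc j))"
    using a0 aS by (intro add_mono sum_mono) auto
  also have "\<dots> = (X 0 + (\<Sum>j<N. X (Suc j))) + K * (\<Sum>j<N. X j) + K * (\<Sum>j<N. U j)"
    by (simp add: sum.distrib sum_distrib_left algebra_simps)
  also have "X 0 + (\<Sum>j<N. X (Suc j)) = (\<Sum>k\<le>N. X k)" by (simp add: sum.atMost_shift)
  also have "(\<Sum>j<N. X j) \<le> (\<Sum>k\<le>N. X k)" by (rule sum_mono2) (auto simp: X0)
  then have "K * (\<Sum>j<N. X j) \<le> K * (\<Sum>k\<le>N. X k)" by (rule mult_left_mono[OF _ K0])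
  finally have "(\<Sum>k\<le>N. a k) \<le> (\<Sum>k\<le>N. X k) + K * (\<Sum>k\<le>N. X k) + K * (\<Sum>j<N. U j)" by linarith
  also have "\<dots> \<le> (K + 1) * ((\<Sum>k\<le>N. X k) + (\<Sum>k<N. U k))"
    using sum_nonneg[of "{..<N}" U] U0 by (simp add: algebra_simps)
  finally show ?thesis .
qed

locale L62f = L62 M w N
  for M :: "'a measure" and w :: "nat \<Rightarrow> 'a \<Rightarrow> real^'d" and N :: nat +
  fixes b :: "nat \<Rightarrow> real^'n \<Rightarrow> real^'m \<Rightarrow> real^'n"
    and Db :: "nat \<Rightarrow> real^'n \<Rightarrow> real^'m \<Rightarrow> ((real^'n) \<times> (real^'m)) \<Rightarrow>\<^sub>L (real^'n)"
    and sig :: "nat \<Rightarrow> 'd \<Rightarrow> real^'n \<Rightarrow> real^'m \<Rightarrow> real^'n"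
    and Dsig :: "nat \<Rightarrow> 'd \<Rightarrow> real^'n \<Rightarrow> real^'m \<Rightarrow> ((real^'n) \<times> (real^'m)) \<Rightarrow>\<^sub>L (real^'n)"
    and ell :: "nat \<Rightarrow> real^'n \<Rightarrow> real^'m \<Rightarrow> real"
    and Dell :: "nat \<Rightarrow> real^'n \<Rightarrow> real^'m \<Rightarrow> ((real^'n) \<times> (real^'m)) \<Rightarrow>\<^sub>L real"
    and Phi :: "real^'n \<Rightarrow> real" and DPhi :: "real^'n \<Rightarrow> (real^'n) \<Rightarrow>\<^sub>L real"
    and c1 c2 :: real
  assumes c_pos: "c1 > 0" "c2 > 0"
    and b_deriv: "\<forall>k<N. \<forall>x u. ((\<lambda>p. b k (fst p) (snd p)) has_derivative blinfun_apply (Db k x u)) (at (x, u))"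
    and b_C1: "\<forall>k<N. continuous_on UNIV (\<lambda>p. Db k (fst p) (snd p))"
    and b_growth: "\<forall>k<N. \<forall>x u. norm (b k x u) \<le> c1 * (1 + norm x + norm u)"
    and b_dbound: "\<forall>k<N. \<forall>x u. onorm (\<lambda>z. blinfun_apply (Db k x u) (z, 0))
                               + onorm (\<lambda>v. blinfun_apply (Db k x u) (0, v)) \<le> c1"
    and sig_deriv: "\<forall>k<N. \<forall>j x u. ((\<lambda>p. sig k j (fst p) (snd p)) has_derivative blinfun_apply (Dsig k j x u)) (at (x, u))"
    and sig_C1: "\<forall>k<N. \<forall>j. continuous_on UNIV (\<lambda>p. Dsig k j (fst p) (snd p))"
    and sig_growth: "\<forall>k<N. \<forall>j x u. norm (sig k j x u) \<le> c1 * (1 + norm x + norm u)"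
    and sig_dbound: "\<forall>k<N. \<forall>j x u. onorm (\<lambda>z. blinfun_apply (Dsig k j x u) (z, 0))
                               + onorm (\<lambda>v. blinfun_apply (Dsig k j x u) (0, v)) \<le> c1"
    and ell_deriv: "\<forall>k<N. \<forall>x u. ((\<lambda>p. ell k (fst p) (snd p)) has_derivative blinfun_apply (Dell k x u)) (at (x, u))"
    and ell_C1: "\<forall>k<N. continuous_on UNIV (\<lambda>p. Dell k (fst p) (snd p))"
    and ell_growth: "\<forall>k<N. \<forall>x u. \<bar>ell k x u\<bar> \<le> c2 * (1 + norm x + norm u)\<^sup>2"
    and ell_dbound: "\<forall>k<N. \<forall>x u. onorm (\<lambda>z. blinfun_apply (Dell k x u) (z, 0))
                               + onorm (\<lambda>v. blinfun_apply (Dell k x u) (0, v)) \<le> c2 * (1 + norm x + norm u)"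
    and Phi_deriv: "\<forall>x. (Phi has_derivative blinfun_apply (DPhi x)) (at x)"
    and Phi_C1: "continuous_on UNIV DPhi"
    and Phi_growth: "\<forall>x. \<bar>Phi x\<bar> \<le> c2 * (1 + norm x)\<^sup>2"
    and Phi_dbound: "\<forall>x. norm (DPhi x) \<le> c2 * (1 + norm x)"
begin

lemma XspSuc: "x \<in> Xsp M w (Suc j) \<longleftrightarrow> (\<exists>y0 y. y0 \<in> L2 M (filt M w j) \<and> (\<forall>i. y i \<in> L2 M (filt M w j)) \<and>
     (\<forall>\<omega>\<in>space M. x \<omega> = y0 \<omega> + (\<Sum>i\<in>UNIV. (w (Suc j) \<omega> $ i) *\<^sub>R y i \<omega>)))"
  by (simp add: Xsp_def)

lemma Xsp0: "x \<in> Xsp M w 0 \<longleftrightarrow> (\<exists>c. \<forall>\<omega>\<in>space M. x \<omega> = c)"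
  by (simp add: Xsp_def)

lemma DXsp: "p \<in> Dom M w N \<Longrightarrow> k \<le> N \<Longrightarrow> fst p k \<in> Xsp M w k"
  by (auto simp: Dom_def)

lemma DX: "p \<in> Dom M w N \<Longrightarrow> k \<le> N \<Longrightarrow> fst p k \<in> L2 M (filt M w k)"
  by (rule Xsp_L2) (auto simp: Dom_def)

lemma DXM: "p \<in> Dom M w N \<Longrightarrow> k \<le> N \<Longrightarrow> fst p k \<in> L2 M M"
  using DX L2_filt_M by blast

lemma DXm: "p \<in> Dom M w N \<Longrightarrow> k \<le> N \<Longrightarrow> fst p k \<in> borel_measurable (filt M w k)"
  using DX unfolding L2_def by blast

lemma DU: "p \<in> Dom M w N \<Longrightarrow> k < N \<Longrightarrow> snd p k \<in> L2 M (filt M w k)"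
  by (auto simp: Dom_def)

lemma DUM: "p \<in> Dom M w N \<Longrightarrow> k < N \<Longrightarrow> snd p k \<in> L2 M M"
  using DU L2_filt_M by (meson less_imp_le)

lemma DUm: "p \<in> Dom M w N \<Longrightarrow> k < N \<Longrightarrow> snd p k \<in> borel_measurable (filt M w k)"
  using DU unfolding L2_def by blast

lemma L2_filt_intro: "f \<in> borel_measurable (filt M w j) \<Longrightarrow> f \<in> L2 M M \<Longrightarrow> f \<in> L2 M (filt M w j)"
  by (simp add: L2_def)

lemma wsum:
  fixes Y :: "'d \<Rightarrow> 'a \<Rightarrow> 'b::euclidean_space"
  assumes j: "j < N" and Y: "\<And>i. Y i \<in> L2 M (filt M w j)"
  shows "(\<lambda>\<omega>. \<Sum>i\<in>UNIV. w (Suc j) \<omega> $ i *\<^sub>R Y i \<omega>) \<in> L2 M M"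
    and "L2norm M (\<lambda>\<omega>. \<Sum>i\<in>UNIV. w (Suc j) \<omega> $ i *\<^sub>R Y i \<omega>) \<le> (\<Sum>i\<in>UNIV. L2norm M (Y i))"
proof -
  note s = L2_sum[of UNIV "\<lambda>i \<omega>. w (Suc j) \<omega> $ i *\<^sub>R Y i \<omega>" M]
  show "(\<lambda>\<omega>. \<Sum>i\<in>UNIV. w (Suc j) \<omega> $ i *\<^sub>R Y i \<omega>) \<in> L2 M M"
    using s L2_w(1)[OF j Y] by auto
  show "L2norm M (\<lambda>\<omega>. \<Sum>i\<in>UNIV. w (Suc j) \<omega> $ i *\<^sub>R Y i \<omega>) \<le> (\<Sum>i\<in>UNIV. L2norm M (Y i))"
    using s L2_w[OF j Y] by auto
qed

lemma growth_L2:
  fixes F :: "'x::euclidean_space \<Rightarrow> 'y::euclidean_space \<Rightarrow> 'z::euclidean_space"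
  assumes C: "continuous_on UNIV (\<lambda>p. F (fst p) (snd p))"
    and gr: "\<forall>x u. norm (F x u) \<le> c * (1 + norm x + norm u)" and c0: "c \<ge> 0"
    and mS: "x \<in> borel_measurable S" "u \<in> borel_measurable S"
    and L: "x \<in> L2 M M" "u \<in> L2 M M"
  shows "(\<lambda>\<omega>. F (x \<omega>) (u \<omega>)) \<in> borel_measurable S" and "(\<lambda>\<omega>. F (x \<omega>) (u \<omega>)) \<in> L2 M M"
proof -
  show "(\<lambda>\<omega>. F (x \<omega>) (u \<omega>)) \<in> borel_measurable S" by (rule comp_meas[OF C mS])
  have mM: "x \<in> borel_measurable M" "u \<in> borel_measurable M" using L by (auto simp: L2_def)
  have g: "(\<lambda>\<omega>. c *\<^sub>R (1 + norm (x \<omega>) + norm (u \<omega>))) \<in> L2 M M"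
    by (rule L2_scale(1)[OF L2_aff2(1)[OF L]])
  show "(\<lambda>\<omega>. F (x \<omega>) (u \<omega>)) \<in> L2 M M"
  proof (rule L2_mono(1)[OF comp_meas[OF C mM] g])
    fix \<omega> show "norm (F (x \<omega>) (u \<omega>)) \<le> norm (c *\<^sub>R (1 + norm (x \<omega>) + norm (u \<omega>)))"
      using gr c0 by (simp add: abs_of_nonneg)
  qed
qed

lemma c1_0: "c1 \<ge> 0" and c2_0: "c2 \<ge> 0" using c_pos by auto

lemma b_cont: "j < N \<Longrightarrow> continuous_on UNIV (\<lambda>p. b j (fst p) (snd p))"
  using cont_of_deriv b_deriv by blast

lemma sig_cont: "j < N \<Longrightarrow> continuous_on UNIV (\<lambda>p. sig j i (fst p) (snd p))"
proof -
  assume "j < N"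
  then have "\<forall>x u. ((\<lambda>p. sig j i (fst p) (snd p)) has_derivative blinfun_apply (Dsig j i x u)) (at (x, u))"
    using sig_deriv by blast
  then show ?thesis by (rule cont_of_deriv)
qed

lemma res1:
  assumes p: "p \<in> Dom M w N" and k: "k \<le> N"
  shows "gmap w x0h b sig p k \<in> Xsp M w k"
proof (cases k)
  case 0
  have "fst p 0 \<in> Xsp M w 0" using p by (auto simp: Dom_def)
  then obtain c where c: "\<forall>\<omega>\<in>space M. fst p 0 \<omega> = c" by (auto simp: Xsp_def)
  then show ?thesis using 0 by (auto simp: Xsp_def gmap_def intro!: exI[of _ "x0h - c"])
next
  case (Suc j)
  have j: "j < N" using k Suc by simp
  have xm: "fst p j \<in> borel_measurable (filt M w j)" and um: "snd p j \<in> borel_measurable (filt M w j)"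
    using DXm[OF p] DUm[OF p] j by auto
  have xL: "fst p j \<in> L2 M M" and uL: "snd p j \<in> L2 M M" using DXM[OF p] DUM[OF p] j by auto
  obtain y0 y where y0: "y0 \<in> L2 M (filt M w j)" and y: "\<forall>i. y i \<in> L2 M (filt M w j)"
    and xe: "\<forall>\<omega>\<in>space M. fst p (Suc j) \<omega> = y0 \<omega> + (\<Sum>i\<in>UNIV. (w (Suc j) \<omega> $ i) *\<^sub>R y i \<omega>)"
    using DXsp[OF p k] unfolding Suc XspSuc by blast
  have bg: "\<forall>x u. norm (b j x u) \<le> c1 * (1 + norm x + norm u)" using b_growth j by blast
  have sg: "\<forall>x u. norm (sig j i x u) \<le> c1 * (1 + norm x + norm u)" for i using sig_growth j by blast
  note B = growth_L2[OF b_cont[OF j] bg c1_0 xm um xL uL]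
  note S = growth_L2[OF sig_cont[OF j] sg c1_0 xm um xL uL]
  define Y0 where "Y0 = (\<lambda>\<omega>. b j (fst p j \<omega>) (snd p j \<omega>) - y0 \<omega>)"
  define Y where "Y = (\<lambda>i \<omega>. sig j i (fst p j \<omega>) (snd p j \<omega>) - y i \<omega>)"
  have y0m: "y0 \<in> borel_measurable (filt M w j)" using y0 by (simp add: L2_def)
  have ym: "y i \<in> borel_measurable (filt M w j)" for i using y by (simp add: L2_def)
  have Y0L: "Y0 \<in> L2 M (filt M w j)" unfolding Y0_def
    by (rule L2_filt_intro[OF borel_measurable_diff[OF B(1) y0m] L2_diff(1)[OF B(2) L2_filt_M[OF y0]]]) (use j in simp)
  have YL: "\<forall>i. Y i \<in> L2 M (filt M w j)" unfolding Y_def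
  proof
    fix i
    show "(\<lambda>\<omega>. sig j i (fst p j \<omega>) (snd p j \<omega>) - y i \<omega>) \<in> L2 M (filt M w j)"
      by (rule L2_filt_intro[OF borel_measurable_diff[OF S(1) ym] L2_diff(1)[OF S(2) L2_filt_M[OF y[rule_format]]]]) (use j in simp)
  qed
  have eq: "\<forall>\<omega>\<in>space M. gmap w x0h b sig p k \<omega> = Y0 \<omega> + (\<Sum>i\<in>UNIV. (w k \<omega> $ i) *\<^sub>R Y i \<omega>)"
  proof
    fix \<omega> assume \<omega>: "\<omega> \<in> space M"
    have g: "gmap w x0h b sig p (Suc j) \<omega> = b j (fst p j \<omega>) (snd p j \<omega>)
          + (\<Sum>i\<in>UNIV. (w (Suc j) \<omega> $ i) *\<^sub>R sig j i (fst p j \<omega>) (snd p j \<omega>)) - fst p (Suc j) \<omega>"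
      by (simp add: gmap_def)
    have s: "(\<Sum>i\<in>UNIV. (w (Suc j) \<omega> $ i) *\<^sub>R Y i \<omega>)
        = (\<Sum>i\<in>UNIV. (w (Suc j) \<omega> $ i) *\<^sub>R sig j i (fst p j \<omega>) (snd p j \<omega>)) - (\<Sum>i\<in>UNIV. (w (Suc j) \<omega> $ i) *\<^sub>R y i \<omega>)"
      unfolding Y_def scaleR_diff_right sum_subtractf ..
    show "gmap w x0h b sig p k \<omega> = Y0 \<omega> + (\<Sum>i\<in>UNIV. (w k \<omega> $ i) *\<^sub>R Y i \<omega>)"
      unfolding Suc g s xe[rule_format, OF \<omega>] Y0_def by (simp add: algebra_simps)
  qed
  show ?thesis using Suc Y0L YL eq unfolding Xsp_def by auto
qed


lemma L2norm_uminus: "L2norm M (\<lambda>\<omega>. - f \<omega>) = L2norm M f"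
  by (simp add: L2norm_def)

lemma b_d: "j < N \<Longrightarrow> \<forall>x u. ((\<lambda>p. b j (fst p) (snd p)) has_derivative blinfun_apply (Db j x u)) (at (x, u))"
  using b_deriv by blast
lemma b_db: "j < N \<Longrightarrow> \<forall>x u. onorm (\<lambda>z. blinfun_apply (Db j x u) (z, 0)) + onorm (\<lambda>v. blinfun_apply (Db j x u) (0, v)) \<le> c1"
  using b_dbound by blast
lemma b_c: "j < N \<Longrightarrow> continuous_on UNIV (\<lambda>p. Db j (fst p) (snd p))"
  using b_C1 by blast
lemma s_d: "j < N \<Longrightarrow> \<forall>x u. ((\<lambda>p. sig j i (fst p) (snd p)) has_derivative blinfun_apply (Dsig j i x u)) (at (x, u))"
  using sig_deriv by blast
lemma s_db: "j < N \<Longrightarrow> \<forall>x u. onorm (\<lambda>z. blinfun_apply (Dsig j i x u) (z, 0)) + onorm (\<lambda>v. blinfun_apply (Dsig j i x u) (0, v)) \<le> c1"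
  using sig_dbound by blast
lemma s_c: "j < N \<Longrightarrow> continuous_on UNIV (\<lambda>p. Dsig j i (fst p) (snd p))"
  using sig_C1 by blast

definition "KK = c1 + real CARD('d) * c1"

lemma KK0: "KK \<ge> 0" using c1_0 by (simp add: KK_def)

lemma comp_lip:
  assumes p: "p \<in> Dom M w N" and q: "q \<in> Dom M w N" and j: "j < N"
  shows "L2norm M (\<lambda>\<omega>. gmap w x0h b sig p (Suc j) \<omega> - gmap w x0h b sig q (Suc j) \<omega>)
    \<le> KK * (L2norm M (\<lambda>\<omega>. fst p j \<omega> - fst q j \<omega>) + L2norm M (\<lambda>\<omega>. snd p j \<omega> - snd q j \<omega>))
       + L2norm M (\<lambda>\<omega>. fst p (Suc j) \<omega> - fst q (Suc j) \<omega>)"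
proof -
  have jl: "j \<le> N" "Suc j \<le> N" using j by auto
  note mS = DXm[OF p jl(1)] DUm[OF p j] DXm[OF q jl(1)] DUm[OF q j]
  note LM = DXM[OF p jl(1)] DUM[OF p j] DXM[OF q jl(1)] DUM[OF q j]
  let ?dx = "L2norm M (\<lambda>\<omega>. fst p j \<omega> - fst q j \<omega>)" and ?du = "L2norm M (\<lambda>\<omega>. snd p j \<omega> - snd q j \<omega>)"
  define A where "A = (\<lambda>\<omega>. b j (fst p j \<omega>) (snd p j \<omega>) - b j (fst q j \<omega>) (snd q j \<omega>))"
  define S where "S = (\<lambda>i \<omega>. sig j i (fst p j \<omega>) (snd p j \<omega>) - sig j i (fst q j \<omega>) (snd q j \<omega>))"
  define X1 where "X1 = (\<lambda>\<omega>. fst p (Suc j) \<omega> - fst q (Suc j) \<omega>)"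
  note DA = diff_L2[OF b_d[OF j] b_db[OF j] mS LM, folded A_def]
  note DS = diff_L2[OF s_d[OF j] s_db[OF j] mS LM, folded S_def]
  have SL: "S i \<in> L2 M (filt M w j)" for i unfolding S_def by (rule L2_filt_intro[OF DS(1) DS(2)])
  note W = wsum[OF j SL]
  have X1L: "X1 \<in> L2 M M" unfolding X1_def by (rule L2_diff(1)[OF DXM[OF p jl(2)] DXM[OF q jl(2)]])
  have eq: "L2norm M (\<lambda>\<omega>. gmap w x0h b sig p (Suc j) \<omega> - gmap w x0h b sig q (Suc j) \<omega>)
      = L2norm M (\<lambda>\<omega>. (A \<omega> + (\<Sum>i\<in>UNIV. w (Suc j) \<omega> $ i *\<^sub>R S i \<omega>)) - X1 \<omega>)"
    by (rule L2norm_cong) (simp add: gmap_def A_def S_def X1_def scaleR_diff_right sum_subtractf algebra_simps)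
  have "L2norm M (\<lambda>\<omega>. (A \<omega> + (\<Sum>i\<in>UNIV. w (Suc j) \<omega> $ i *\<^sub>R S i \<omega>)) - X1 \<omega>)
      \<le> L2norm M (\<lambda>\<omega>. A \<omega> + (\<Sum>i\<in>UNIV. w (Suc j) \<omega> $ i *\<^sub>R S i \<omega>)) + L2norm M X1"
    by (rule L2_diff(2)[OF L2_add(1)[OF DA(2) W(1)] X1L])
  also have "L2norm M (\<lambda>\<omega>. A \<omega> + (\<Sum>i\<in>UNIV. w (Suc j) \<omega> $ i *\<^sub>R S i \<omega>))
      \<le> L2norm M A + L2norm M (\<lambda>\<omega>. \<Sum>i\<in>UNIV. w (Suc j) \<omega> $ i *\<^sub>R S i \<omega>)"
    by (rule L2_add(2)[OF DA(2) W(1)])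
  also have "L2norm M (\<lambda>\<omega>. \<Sum>i\<in>UNIV. w (Suc j) \<omega> $ i *\<^sub>R S i \<omega>) \<le> (\<Sum>i\<in>UNIV. L2norm M (S i))"
    by (rule W(2))
  also have "(\<Sum>i\<in>UNIV. L2norm M (S i)) \<le> (\<Sum>i\<in>(UNIV::'d set). c1 * ?dx + c1 * ?du)"
    by (rule sum_mono) (unfold S_def, rule DS(3))
  also have "L2norm M A \<le> c1 * ?dx + c1 * ?du" by (rule DA(3))
  finally have "L2norm M (\<lambda>\<omega>. (A \<omega> + (\<Sum>i\<in>UNIV. w (Suc j) \<omega> $ i *\<^sub>R S i \<omega>)) - X1 \<omega>)
      \<le> c1 * ?dx + c1 * ?du + (\<Sum>i\<in>(UNIV::'d set). c1 * ?dx + c1 * ?du) + L2norm M X1"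
    by simp
  also have "\<dots> = KK * (?dx + ?du) + L2norm M X1" by (simp add: KK_def algebra_simps)
  finally show ?thesis unfolding eq X1_def .
qed

lemma normX_diff: "normX M N (lincomb 1 f (-1) g) = (\<Sum>k\<le>N. L2norm M (\<lambda>\<omega>. f k \<omega> - g k \<omega>))"
  by (simp add: normX_def lincomb_def)

lemma normXU_diff: "normXU M N (plincomb 1 p (-1) q) =
   (\<Sum>k\<le>N. L2norm M (\<lambda>\<omega>. fst p k \<omega> - fst q k \<omega>)) + (\<Sum>k<N. L2norm M (\<lambda>\<omega>. snd p k \<omega> - snd q k \<omega>))"
  by (simp add: normXU_def plincomb_def lincomb_def)

lemma res2: "lipschitz_G M w N (gmap w x0h b sig)"
  unfolding lipschitz_G_def
proof (intro exI ballI)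
  fix p q :: "(nat \<Rightarrow> 'a \<Rightarrow> real^'n) \<times> (nat \<Rightarrow> 'a \<Rightarrow> real^'m)"
  assume p: "p \<in> Dom M w N" and q: "q \<in> Dom M w N"
  have "(\<Sum>k\<le>N. L2norm M (\<lambda>\<omega>. gmap w x0h b sig p k \<omega> - gmap w x0h b sig q k \<omega>))
     \<le> (KK + 1) * ((\<Sum>k\<le>N. L2norm M (\<lambda>\<omega>. fst p k \<omega> - fst q k \<omega>)) + (\<Sum>k<N. L2norm M (\<lambda>\<omega>. snd p k \<omega> - snd q k \<omega>)))"
  proof (rule sum_shift_bound[OF L2norm_nonneg L2norm_nonneg KK0])
    have "L2norm M (\<lambda>\<omega>. gmap w x0h b sig p 0 \<omega> - gmap w x0h b sig q 0 \<omega>) = L2norm M (\<lambda>\<omega>. - (fst p 0 \<omega> - fst q 0 \<omega>))"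
      by (rule L2norm_cong) (simp add: gmap_def)
    moreover have "L2norm M (\<lambda>\<omega>. - (fst p 0 \<omega> - fst q 0 \<omega>)) = L2norm M (\<lambda>\<omega>. fst p 0 \<omega> - fst q 0 \<omega>)"
      by (rule L2norm_uminus)
    ultimately show "L2norm M (\<lambda>\<omega>. gmap w x0h b sig p 0 \<omega> - gmap w x0h b sig q 0 \<omega>) \<le> L2norm M (\<lambda>\<omega>. fst p 0 \<omega> - fst q 0 \<omega>)"
      by linarith
    show "L2norm M (\<lambda>\<omega>. gmap w x0h b sig p (Suc j) \<omega> - gmap w x0h b sig q (Suc j) \<omega>)
        \<le> KK * (L2norm M (\<lambda>\<omega>. fst p j \<omega> - fst q j \<omega>) + L2norm M (\<lambda>\<omega>. snd p j \<omega> - snd q j \<omega>))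
           + L2norm M (\<lambda>\<omega>. fst p (Suc j) \<omega> - fst q (Suc j) \<omega>)" if "j < N" for j
      by (rule comp_lip[OF p q that])
  qed
  then show "normX M N (lincomb 1 (gmap w x0h b sig p) (-1) (gmap w x0h b sig q)) \<le> (KK + 1) * normXU M N (plincomb 1 p (-1) q)"
    unfolding normX_diff normXU_diff .
qed


lemma res3a:
  assumes p: "p \<in> Dom M w N" and q: "q \<in> Dom M w N" and k: "k \<le> N"
  shows "dgmap w Db Dsig p q k \<in> Xsp M w k"
proof (cases k)
  case 0
  have "fst q 0 \<in> Xsp M w 0" using q by (auto simp: Dom_def)
  then obtain c where c: "\<forall>\<omega>\<in>space M. fst q 0 \<omega> = c" by (auto simp: Xsp_def)
  then show ?thesis using 0 by (auto simp: Xsp_def dgmap_def intro!: exI[of _ "- c"])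
next
  case (Suc j)
  have j: "j < N" and jl: "j \<le> N" using k Suc by auto
  note mS = DXm[OF p jl] DUm[OF p j] DXm[OF q jl] DUm[OF q j]
  note LM = DXM[OF p jl] DUM[OF p j] DXM[OF q jl] DUM[OF q j]
  obtain y0 y where y0: "y0 \<in> L2 M (filt M w j)" and y: "\<forall>i. y i \<in> L2 M (filt M w j)"
    and xe: "\<forall>\<omega>\<in>space M. fst q (Suc j) \<omega> = y0 \<omega> + (\<Sum>i\<in>UNIV. (w (Suc j) \<omega> $ i) *\<^sub>R y i \<omega>)"
    using DXsp[OF q k] unfolding Suc XspSuc by blast
  note B = D_L2[OF b_db[OF j] b_c[OF j] mS LM]
  note S = D_L2[OF s_db[OF j] s_c[OF j] mS LM]
  define Y0 where "Y0 = (\<lambda>\<omega>. blinfun_apply (Db j (fst p j \<omega>) (snd p j \<omega>)) (fst q j \<omega>, snd q j \<omega>) - y0 \<omega>)"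
  define Y where "Y = (\<lambda>i \<omega>. blinfun_apply (Dsig j i (fst p j \<omega>) (snd p j \<omega>)) (fst q j \<omega>, snd q j \<omega>) - y i \<omega>)"
  have y0m: "y0 \<in> borel_measurable (filt M w j)" using y0 by (simp add: L2_def)
  have ym: "y i \<in> borel_measurable (filt M w j)" for i using y by (simp add: L2_def)
  have Y0L: "Y0 \<in> L2 M (filt M w j)" unfolding Y0_def
    by (rule L2_filt_intro[OF borel_measurable_diff[OF B(1) y0m] L2_diff(1)[OF B(2) L2_filt_M[OF y0]]]) (use j in simp)
  have YL: "\<forall>i. Y i \<in> L2 M (filt M w j)" unfolding Y_def
  proof
    fix i
    show "(\<lambda>\<omega>. blinfun_apply (Dsig j i (fst p j \<omega>) (snd p j \<omega>)) (fst q j \<omega>, snd q j \<omega>) - y i \<omega>) \<in> L2 M (filt M w j)"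
      by (rule L2_filt_intro[OF borel_measurable_diff[OF S(1) ym] L2_diff(1)[OF S(2) L2_filt_M[OF y[rule_format]]]]) (use j in simp)
  qed
  have eq: "\<forall>\<omega>\<in>space M. dgmap w Db Dsig p q k \<omega> = Y0 \<omega> + (\<Sum>i\<in>UNIV. (w k \<omega> $ i) *\<^sub>R Y i \<omega>)"
  proof
    fix \<omega> assume \<omega>: "\<omega> \<in> space M"
    have g: "dgmap w Db Dsig p q (Suc j) \<omega> = blinfun_apply (Db j (fst p j \<omega>) (snd p j \<omega>)) (fst q j \<omega>, snd q j \<omega>)
          + (\<Sum>i\<in>UNIV. (w (Suc j) \<omega> $ i) *\<^sub>R blinfun_apply (Dsig j i (fst p j \<omega>) (snd p j \<omega>)) (fst q j \<omega>, snd q j \<omega>)) - fst q (Suc j) \<omega>"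
      by (simp add: dgmap_def)
    have s: "(\<Sum>i\<in>UNIV. (w (Suc j) \<omega> $ i) *\<^sub>R Y i \<omega>)
        = (\<Sum>i\<in>UNIV. (w (Suc j) \<omega> $ i) *\<^sub>R blinfun_apply (Dsig j i (fst p j \<omega>) (snd p j \<omega>)) (fst q j \<omega>, snd q j \<omega>)) - (\<Sum>i\<in>UNIV. (w (Suc j) \<omega> $ i) *\<^sub>R y i \<omega>)"
      unfolding Y_def scaleR_diff_right sum_subtractf ..
    show "dgmap w Db Dsig p q k \<omega> = Y0 \<omega> + (\<Sum>i\<in>UNIV. (w k \<omega> $ i) *\<^sub>R Y i \<omega>)"
      unfolding Suc g s xe[rule_format, OF \<omega>] Y0_def by (simp add: algebra_simps)
  qed
  show ?thesis using Suc Y0L YL eq unfolding Xsp_def by auto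
qed

lemma blin_lin: "blinfun_apply D (a *\<^sub>R z1 + c *\<^sub>R z2, a *\<^sub>R v1 + c *\<^sub>R v2)
   = a *\<^sub>R blinfun_apply D (z1, v1) + c *\<^sub>R blinfun_apply D (z2, v2)"
proof -
  have e: "(a *\<^sub>R z1 + c *\<^sub>R z2, a *\<^sub>R v1 + c *\<^sub>R v2) = a *\<^sub>R (z1, v1) + c *\<^sub>R (z2, v2)" by simp
  have "blinfun_apply D (a *\<^sub>R (z1, v1) + c *\<^sub>R (z2, v2)) = blinfun_apply D (a *\<^sub>R (z1, v1)) + blinfun_apply D (c *\<^sub>R (z2, v2))"
    by (rule blinfun.add_right)
  also have "\<dots> = a *\<^sub>R blinfun_apply D (z1, v1) + c *\<^sub>R blinfun_apply D (z2, v2)"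
    by (simp only: blinfun.scaleR_right)
  finally show ?thesis unfolding e .
qed

lemma dg_lin: "dgmap w Db Dsig p (plincomb a q1 c q2) k \<omega>
   = a *\<^sub>R dgmap w Db Dsig p q1 k \<omega> + c *\<^sub>R dgmap w Db Dsig p q2 k \<omega>"
proof (cases k)
  case 0
  then show ?thesis by (simp add: dgmap_def plincomb_def lincomb_def algebra_simps)
next
  case (Suc j)
  let ?x = "fst p j \<omega>" and ?u = "snd p j \<omega>"
  have s: "(\<Sum>i\<in>UNIV. w (Suc j) \<omega> $ i *\<^sub>R blinfun_apply (Dsig j i ?x ?u)
              (a *\<^sub>R fst q1 j \<omega> + c *\<^sub>R fst q2 j \<omega>, a *\<^sub>R snd q1 j \<omega> + c *\<^sub>R snd q2 j \<omega>))
      = a *\<^sub>R (\<Sum>i\<in>UNIV. w (Suc j) \<omega> $ i *\<^sub>R blinfun_apply (Dsig j i ?x ?u) (fst q1 j \<omega>, snd q1 j \<omega>))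
        + c *\<^sub>R (\<Sum>i\<in>UNIV. w (Suc j) \<omega> $ i *\<^sub>R blinfun_apply (Dsig j i ?x ?u) (fst q2 j \<omega>, snd q2 j \<omega>))"
    unfolding blin_lin scaleR_add_right scaleR_sum_right sum.distrib
    by (simp add: mult.commute)
  show ?thesis
    using s by (simp add: Suc dgmap_def plincomb_def lincomb_def blin_lin algebra_simps)
qed

lemma res3b:
  "normX M N (lincomb 1 (dgmap w Db Dsig p (plincomb a q1 c q2)) (-1)
      (lincomb a (dgmap w Db Dsig p q1) c (dgmap w Db Dsig p q2))) = 0"
  by (simp add: normX_def lincomb_def dg_lin L2norm_def)

lemma comp_dg:
  assumes p: "p \<in> Dom M w N" and q: "q \<in> Dom M w N" and j: "j < N"
  shows "L2norm M (dgmap w Db Dsig p q (Suc j))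
    \<le> KK * (L2norm M (fst q j) + L2norm M (snd q j)) + L2norm M (fst q (Suc j))"
proof -
  have jl: "j \<le> N" "Suc j \<le> N" using j by auto
  note mS = DXm[OF p jl(1)] DUm[OF p j] DXm[OF q jl(1)] DUm[OF q j]
  note LM = DXM[OF p jl(1)] DUM[OF p j] DXM[OF q jl(1)] DUM[OF q j]
  let ?dx = "L2norm M (fst q j)" and ?du = "L2norm M (snd q j)"
  define A where "A = (\<lambda>\<omega>. blinfun_apply (Db j (fst p j \<omega>) (snd p j \<omega>)) (fst q j \<omega>, snd q j \<omega>))"
  define S where "S = (\<lambda>i \<omega>. blinfun_apply (Dsig j i (fst p j \<omega>) (snd p j \<omega>)) (fst q j \<omega>, snd q j \<omega>))"
  note DA = D_L2[OF b_db[OF j] b_c[OF j] mS LM, folded A_def]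
  note DS = D_L2[OF s_db[OF j] s_c[OF j] mS LM]
  have SL: "S i \<in> L2 M (filt M w j)" for i unfolding S_def by (rule L2_filt_intro[OF DS(1) DS(2)])
  note W = wsum[OF j SL]
  have X1L: "fst q (Suc j) \<in> L2 M M" by (rule DXM[OF q jl(2)])
  have eq: "dgmap w Db Dsig p q (Suc j) = (\<lambda>\<omega>. (A \<omega> + (\<Sum>i\<in>UNIV. w (Suc j) \<omega> $ i *\<^sub>R S i \<omega>)) - fst q (Suc j) \<omega>)"
    by (simp add: dgmap_def A_def S_def)
  have "L2norm M (\<lambda>\<omega>. (A \<omega> + (\<Sum>i\<in>UNIV. w (Suc j) \<omega> $ i *\<^sub>R S i \<omega>)) - fst q (Suc j) \<omega>)
      \<le> L2norm M (\<lambda>\<omega>. A \<omega> + (\<Sum>i\<in>UNIV. w (Suc j) \<omega> $ i *\<^sub>R S i \<omega>)) + L2norm M (fst q (Suc j))"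
    by (rule L2_diff(2)[OF L2_add(1)[OF DA(2) W(1)] X1L])
  also have "L2norm M (\<lambda>\<omega>. A \<omega> + (\<Sum>i\<in>UNIV. w (Suc j) \<omega> $ i *\<^sub>R S i \<omega>))
      \<le> L2norm M A + L2norm M (\<lambda>\<omega>. \<Sum>i\<in>UNIV. w (Suc j) \<omega> $ i *\<^sub>R S i \<omega>)"
    by (rule L2_add(2)[OF DA(2) W(1)])
  also have "L2norm M (\<lambda>\<omega>. \<Sum>i\<in>UNIV. w (Suc j) \<omega> $ i *\<^sub>R S i \<omega>) \<le> (\<Sum>i\<in>UNIV. L2norm M (S i))"
    by (rule W(2))
  also have "(\<Sum>i\<in>UNIV. L2norm M (S i)) \<le> (\<Sum>i\<in>(UNIV::'d set). c1 * ?dx + c1 * ?du)"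
    by (rule sum_mono) (unfold S_def, rule DS(3))
  also have "L2norm M A \<le> c1 * ?dx + c1 * ?du" by (rule DA(3))
  finally have "L2norm M (\<lambda>\<omega>. (A \<omega> + (\<Sum>i\<in>UNIV. w (Suc j) \<omega> $ i *\<^sub>R S i \<omega>)) - fst q (Suc j) \<omega>)
      \<le> c1 * ?dx + c1 * ?du + (\<Sum>i\<in>(UNIV::'d set). c1 * ?dx + c1 * ?du) + L2norm M (fst q (Suc j))"
    by simp
  also have "\<dots> = KK * (?dx + ?du) + L2norm M (fst q (Suc j))" by (simp add: KK_def algebra_simps)
  finally show ?thesis unfolding eq .
qed

lemma res3c:
  assumes p: "p \<in> Dom M w N" and q: "q \<in> Dom M w N"
  shows "normX M N (dgmap w Db Dsig p q) \<le> (KK + 1) * normXU M N q"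
proof -
  have "(\<Sum>k\<le>N. L2norm M (dgmap w Db Dsig p q k))
     \<le> (KK + 1) * ((\<Sum>k\<le>N. L2norm M (fst q k)) + (\<Sum>k<N. L2norm M (snd q k)))"
  proof (rule sum_shift_bound[OF L2norm_nonneg L2norm_nonneg KK0])
    have "dgmap w Db Dsig p q 0 = (\<lambda>\<omega>. - fst q 0 \<omega>)" by (simp add: dgmap_def)
    then show "L2norm M (dgmap w Db Dsig p q 0) \<le> L2norm M (fst q 0)" by (simp add: L2norm_uminus)
    show "L2norm M (dgmap w Db Dsig p q (Suc j)) \<le> KK * (L2norm M (fst q j) + L2norm M (snd q j)) + L2norm M (fst q (Suc j))"
      if "j < N" for j by (rule comp_dg[OF p q that])
  qed
  then show ?thesis by (simp add: normX_def normXU_def)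
qed


lemma ident_Suc:
  assumes t: "t \<noteq> 0"
  shows "(1 / t) *\<^sub>R (1 *\<^sub>R gmap w x0h b sig (plincomb 1 p t q) (Suc j) \<omega> + (-1) *\<^sub>R gmap w x0h b sig p (Suc j) \<omega>)
      + (-1) *\<^sub>R dgmap w Db Dsig p q (Suc j) \<omega>
    = ((b j (fst p j \<omega> + t *\<^sub>R fst q j \<omega>) (snd p j \<omega> + t *\<^sub>R snd q j \<omega>) - b j (fst p j \<omega>) (snd p j \<omega>)) /\<^sub>R t
        - blinfun_apply (Db j (fst p j \<omega>) (snd p j \<omega>)) (fst q j \<omega>, snd q j \<omega>))
      + (\<Sum>i\<in>UNIV. w (Suc j) \<omega> $ i *\<^sub>R
         ((sig j i (fst p j \<omega> + t *\<^sub>R fst q j \<omega>) (snd p j \<omega> + t *\<^sub>R snd q j \<omega>) - sig j i (fst p j \<omega>) (snd p j \<omega>)) /\<^sub>R t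
        - blinfun_apply (Dsig j i (fst p j \<omega>) (snd p j \<omega>)) (fst q j \<omega>, snd q j \<omega>)))"
  using t by (simp add: gmap_def dgmap_def plincomb_def lincomb_def divide_inverse scaleR_diff_right scaleR_add_right
      scaleR_sum_right sum_subtractf sum_negf sum.distrib algebra_simps)


lemma res3d:
  assumes p: "p \<in> Dom M w N" and q: "q \<in> Dom M w N"
  shows "((\<lambda>t. normX M N (lincomb (1 / t) (lincomb 1 (gmap w x0h b sig (plincomb 1 p t q)) (-1) (gmap w x0h b sig p))
            (-1) (dgmap w Db Dsig p q))) \<longlongrightarrow> 0) (at 0)"
  unfolding normX_def lincomb_def
proof (rule tendsto_null_sum)
  fix k assume k: "k \<in> {..N}"
  show "((\<lambda>t. L2norm M (\<lambda>\<omega>. (1 / t) *\<^sub>R (1 *\<^sub>R gmap w x0h b sig (plincomb 1 p t q) k \<omega> + (-1) *\<^sub>R gmap w x0h b sig p k \<omega>)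
      + (-1) *\<^sub>R dgmap w Db Dsig p q k \<omega>)) \<longlongrightarrow> 0) (at 0)"
  proof (cases k)
    case 0
    have z: "(\<lambda>\<omega>. (1 / t) *\<^sub>R (1 *\<^sub>R gmap w x0h b sig (plincomb 1 p t q) 0 \<omega> + (-1) *\<^sub>R gmap w x0h b sig p 0 \<omega>)
      + (-1) *\<^sub>R dgmap w Db Dsig p q 0 \<omega>) = (\<lambda>\<omega>. 0)" if "t \<noteq> 0" for t
      using that by (simp add: fun_eq_iff gmap_def dgmap_def plincomb_def lincomb_def algebra_simps)
    have "\<forall>\<^sub>F t in at 0. L2norm M (\<lambda>\<omega>. (1 / t) *\<^sub>R (1 *\<^sub>R gmap w x0h b sig (plincomb 1 p t q) 0 \<omega> + (-1) *\<^sub>R gmap w x0h b sig p 0 \<omega>)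
      + (-1) *\<^sub>R dgmap w Db Dsig p q 0 \<omega>) = 0"
      unfolding eventually_at_filter
    proof (rule always_eventually, intro allI impI)
      fix t :: real assume t: "t \<noteq> 0"
      show "L2norm M (\<lambda>\<omega>. (1 / t) *\<^sub>R (1 *\<^sub>R gmap w x0h b sig (plincomb 1 p t q) 0 \<omega> + (-1) *\<^sub>R gmap w x0h b sig p 0 \<omega>)
      + (-1) *\<^sub>R dgmap w Db Dsig p q 0 \<omega>) = 0"
        unfolding z[OF t] by (simp add: L2norm_def)
    qed
    then show ?thesis unfolding 0 by (rule tendsto_eventually)
  next
    case (Suc j)
    have j: "j < N" and jl: "j \<le> N" using k Suc by auto
    note mS = DXm[OF p jl] DUm[OF p j] DXm[OF q jl] DUm[OF q j]
    note LM = DXM[OF p jl] DUM[OF p j] DXM[OF q jl] DUM[OF q j]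
    define QB where "QB = (\<lambda>t \<omega>. (b j (fst p j \<omega> + t *\<^sub>R fst q j \<omega>) (snd p j \<omega> + t *\<^sub>R snd q j \<omega>) - b j (fst p j \<omega>) (snd p j \<omega>)) /\<^sub>R t
        - blinfun_apply (Db j (fst p j \<omega>) (snd p j \<omega>)) (fst q j \<omega>, snd q j \<omega>))"
    define QS where "QS = (\<lambda>i t \<omega>. (sig j i (fst p j \<omega> + t *\<^sub>R fst q j \<omega>) (snd p j \<omega> + t *\<^sub>R snd q j \<omega>) - sig j i (fst p j \<omega>) (snd p j \<omega>)) /\<^sub>R t
        - blinfun_apply (Dsig j i (fst p j \<omega>) (snd p j \<omega>)) (fst q j \<omega>, snd q j \<omega>))"
    note QBr = quot_L2[OF b_d[OF j] b_db[OF j] b_c[OF j] mS LM, folded QB_def]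
    have QSr: "QS i t \<in> L2 M (filt M w j)" "((\<lambda>t. L2norm M (QS i t)) \<longlongrightarrow> 0) (at 0)" for i t
    proof -
      note r = quot_L2[OF s_d[of j i, OF j] s_db[of j i, OF j] s_c[of j i, OF j] mS LM]
      show "QS i t \<in> L2 M (filt M w j)" unfolding QS_def by (rule L2_filt_intro[OF r(1) r(2)])
      show "((\<lambda>t. L2norm M (QS i t)) \<longlongrightarrow> 0) (at 0)" unfolding QS_def by (rule r(3))
    qed
    have QBL: "QB t \<in> L2 M M" for t unfolding QB_def by (rule QBr(2))
    have QBt: "((\<lambda>t. L2norm M (QB t)) \<longlongrightarrow> 0) (at 0)" unfolding QB_def by (rule QBr(3))
    show ?thesis unfolding Suc
    proof (rule tendsto_sandwich[where f="\<lambda>t. 0" and h="\<lambda>t. L2norm M (QB t) + (\<Sum>i\<in>UNIV. L2norm M (QS i t))"])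
      show "\<forall>\<^sub>F t in at 0. 0 \<le> L2norm M (\<lambda>\<omega>. (1 / t) *\<^sub>R (1 *\<^sub>R gmap w x0h b sig (plincomb 1 p t q) (Suc j) \<omega> + (-1) *\<^sub>R gmap w x0h b sig p (Suc j) \<omega>)
        + (-1) *\<^sub>R dgmap w Db Dsig p q (Suc j) \<omega>)"
        by (rule always_eventually) (simp add: L2norm_nonneg)
      show "\<forall>\<^sub>F t in at 0. L2norm M (\<lambda>\<omega>. (1 / t) *\<^sub>R (1 *\<^sub>R gmap w x0h b sig (plincomb 1 p t q) (Suc j) \<omega> + (-1) *\<^sub>R gmap w x0h b sig p (Suc j) \<omega>)
        + (-1) *\<^sub>R dgmap w Db Dsig p q (Suc j) \<omega>) \<le> L2norm M (QB t) + (\<Sum>i\<in>UNIV. L2norm M (QS i t))"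
        unfolding eventually_at_filter
      proof (rule always_eventually, intro allI impI)
        fix t :: real assume t: "t \<noteq> 0"
        have "L2norm M (\<lambda>\<omega>. (1 / t) *\<^sub>R (1 *\<^sub>R gmap w x0h b sig (plincomb 1 p t q) (Suc j) \<omega> + (-1) *\<^sub>R gmap w x0h b sig p (Suc j) \<omega>)
          + (-1) *\<^sub>R dgmap w Db Dsig p q (Suc j) \<omega>) = L2norm M (\<lambda>\<omega>. QB t \<omega> + (\<Sum>i\<in>UNIV. w (Suc j) \<omega> $ i *\<^sub>R QS i t \<omega>))"
          unfolding ident_Suc[OF t] QB_def QS_def ..
        also have "\<dots> \<le> L2norm M (QB t) + L2norm M (\<lambda>\<omega>. \<Sum>i\<in>UNIV. w (Suc j) \<omega> $ i *\<^sub>R QS i t \<omega>)"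
          by (rule L2_add(2)[OF QBL wsum(1)[OF j QSr(1)]])
        also have "L2norm M (\<lambda>\<omega>. \<Sum>i\<in>UNIV. w (Suc j) \<omega> $ i *\<^sub>R QS i t \<omega>) \<le> (\<Sum>i\<in>UNIV. L2norm M (QS i t))"
          by (rule wsum(2)[OF j QSr(1)])
        finally show "L2norm M (\<lambda>\<omega>. (1 / t) *\<^sub>R (1 *\<^sub>R gmap w x0h b sig (plincomb 1 p t q) (Suc j) \<omega> + (-1) *\<^sub>R gmap w x0h b sig p (Suc j) \<omega>)
          + (-1) *\<^sub>R dgmap w Db Dsig p q (Suc j) \<omega>) \<le> L2norm M (QB t) + (\<Sum>i\<in>UNIV. L2norm M (QS i t))" by simp
      qed
      show "((\<lambda>t. 0::real) \<longlongrightarrow> 0) (at 0)" by simp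
      show "((\<lambda>t. L2norm M (QB t) + (\<Sum>i\<in>UNIV. L2norm M (QS i t))) \<longlongrightarrow> 0) (at 0)"
        by (intro tendsto_add_zero QBt tendsto_null_sum QSr(2))
    qed
  qed
qed

lemma res3:
  assumes p: "p \<in> Dom M w N"
  shows "gateaux_deriv_G M w N (gmap w x0h b sig) (dgmap w Db Dsig p) p"
  unfolding gateaux_deriv_G_def
  using res3a[OF p] res3b res3c[OF p] res3d[OF p] by blast


definition "K4 = 4 * c2"

lemma K40: "K4 \<ge> 0" using c2_0 by (simp add: K4_def)

lemma ell_ctx:
  assumes k: "k < N"
  shows "\<forall>pr. ((\<lambda>pr. ell k (fst pr) (snd pr)) has_derivative blinfun_apply ((\<lambda>pr. Dell k (fst pr) (snd pr)) pr)) (at pr)"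
    and "continuous_on UNIV (\<lambda>pr. Dell k (fst pr) (snd pr))"
    and "\<forall>pr. norm ((\<lambda>pr. Dell k (fst pr) (snd pr)) pr) \<le> K4 * (1 + norm pr)"
    and "\<forall>pr. \<bar>(\<lambda>pr. ell k (fst pr) (snd pr)) pr\<bar> \<le> K4 * (1 + norm pr)\<^sup>2"
proof -
  show "\<forall>pr. ((\<lambda>pr. ell k (fst pr) (snd pr)) has_derivative blinfun_apply ((\<lambda>pr. Dell k (fst pr) (snd pr)) pr)) (at pr)"
  proof
    fix pr :: "(real^'n) \<times> (real^'m)"
    show "((\<lambda>pr. ell k (fst pr) (snd pr)) has_derivative blinfun_apply ((\<lambda>pr. Dell k (fst pr) (snd pr)) pr)) (at pr)"
      using ell_deriv k by (cases pr) auto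
  qed
  show "continuous_on UNIV (\<lambda>pr. Dell k (fst pr) (snd pr))" using ell_C1 k by blast
  have nb: "1 + norm (fst pr) + norm (snd pr) \<le> 2 * (1 + norm pr)" for pr :: "(real^'n) \<times> (real^'m)"
    using norm_fst_le[of "fst pr" "snd pr"] norm_snd_le[of "snd pr" "fst pr"] by simp
  show "\<forall>pr. norm ((\<lambda>pr. Dell k (fst pr) (snd pr)) pr) \<le> K4 * (1 + norm pr)"
  proof
    fix pr :: "(real^'n) \<times> (real^'m)"
    have db: "onorm (\<lambda>z. blinfun_apply (Dell k (fst pr) (snd pr)) (z, 0)) + onorm (\<lambda>v. blinfun_apply (Dell k (fst pr) (snd pr)) (0, v))
        \<le> c2 * (1 + norm (fst pr) + norm (snd pr))" using ell_dbound k by blast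
    have "norm (Dell k (fst pr) (snd pr)) \<le> c2 * (1 + norm (fst pr) + norm (snd pr))"
    proof (rule norm_blinfun_bound)
      show "0 \<le> c2 * (1 + norm (fst pr) + norm (snd pr))" using c2_0 by simp
      fix y :: "(real^'n) \<times> (real^'m)"
      show "norm (blinfun_apply (Dell k (fst pr) (snd pr)) y) \<le> c2 * (1 + norm (fst pr) + norm (snd pr)) * norm y"
        using blin_bound(1)[OF db, of "fst y" "snd y"] by simp
    qed
    also have "\<dots> \<le> c2 * (2 * (1 + norm pr))" by (rule mult_left_mono[OF nb c2_0])
    also have "\<dots> = (2 * c2) * (1 + norm pr)" by simp
    also have "\<dots> \<le> (4 * c2) * (1 + norm pr)" by (rule mult_right_mono) (use c2_0 in auto)
    also have "\<dots> = K4 * (1 + norm pr)" by (simp add: K4_def)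
    finally show "norm ((\<lambda>pr. Dell k (fst pr) (snd pr)) pr) \<le> K4 * (1 + norm pr)" by simp
  qed
  show "\<forall>pr. \<bar>(\<lambda>pr. ell k (fst pr) (snd pr)) pr\<bar> \<le> K4 * (1 + norm pr)\<^sup>2"
  proof
    fix pr :: "(real^'n) \<times> (real^'m)"
    have "\<bar>ell k (fst pr) (snd pr)\<bar> \<le> c2 * (1 + norm (fst pr) + norm (snd pr))\<^sup>2" using ell_growth k by blast
    also have "(1 + norm (fst pr) + norm (snd pr))\<^sup>2 \<le> (2 * (1 + norm pr))\<^sup>2"
      by (rule power_mono[OF nb]) simp
    also have "c2 * (2 * (1 + norm pr))\<^sup>2 = K4 * (1 + norm pr)\<^sup>2"
      unfolding K4_def power_mult_distrib by simp
    finally show "\<bar>(\<lambda>pr. ell k (fst pr) (snd pr)) pr\<bar> \<le> K4 * (1 + norm pr)\<^sup>2" using c2_0 by (simp add: mult_left_mono)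
  qed
qed

lemma Phi_ctx:
  shows "\<forall>x. (Phi has_derivative blinfun_apply (DPhi x)) (at x)"
    and "continuous_on UNIV DPhi"
    and "\<forall>x. norm (DPhi x) \<le> K4 * (1 + norm x)"
    and "\<forall>x. \<bar>Phi x\<bar> \<le> K4 * (1 + norm x)\<^sup>2"
proof -
  show "\<forall>x. (Phi has_derivative blinfun_apply (DPhi x)) (at x)" by (rule Phi_deriv)
  show "continuous_on UNIV DPhi" by (rule Phi_C1)
  show "\<forall>x. norm (DPhi x) \<le> K4 * (1 + norm x)"
  proof
    fix x :: "real^'n"
    have "norm (DPhi x) \<le> c2 * (1 + norm x)" using Phi_dbound by blast
    also have "\<dots> \<le> K4 * (1 + norm x)" using c2_0 by (intro mult_right_mono) (auto simp: K4_def)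
    finally show "norm (DPhi x) \<le> K4 * (1 + norm x)" .
  qed
  show "\<forall>x. \<bar>Phi x\<bar> \<le> K4 * (1 + norm x)\<^sup>2"
  proof
    fix x :: "real^'n"
    have "\<bar>Phi x\<bar> \<le> c2 * (1 + norm x)\<^sup>2" using Phi_growth by blast
    also have "\<dots> \<le> K4 * (1 + norm x)\<^sup>2" using c2_0 by (intro mult_right_mono) (auto simp: K4_def)
    finally show "\<bar>Phi x\<bar> \<le> K4 * (1 + norm x)\<^sup>2" .
  qed
qed

lemma fmap_eq:
  assumes X: "\<And>k. k \<le> N \<Longrightarrow> fst p k \<in> L2 M M" and U: "\<And>k. k < N \<Longrightarrow> snd p k \<in> L2 M M"
  shows "fmap M N ell Phi p = (\<Sum>k<N. \<integral>\<omega>. ell k (fst p k \<omega>) (snd p k \<omega>) \<partial>M) + (\<integral>\<omega>. Phi (fst p N \<omega>) \<partial>M)"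
proof -
  have ie: "integrable M (\<lambda>\<omega>. ell k (fst p k \<omega>) (snd p k \<omega>))" if k: "k < N" for k
    using f_int[OF ell_ctx[OF k] L2_pair(1)[OF X U[OF k]]] k by simp
  have ip: "integrable M (\<lambda>\<omega>. Phi (fst p N \<omega>))"
    using f_int[OF Phi_ctx X] by simp
  have isum: "integrable M (\<lambda>\<omega>. \<Sum>k<N. ell k (fst p k \<omega>) (snd p k \<omega>))"
    by (rule Bochner_Integration.integrable_sum) (use ie in auto)
  show ?thesis unfolding fmap_def
    apply (subst Bochner_Integration.integral_add[OF isum ip])
    apply (subst Bochner_Integration.integral_sum)
    using ie by auto
qed

lemma dfmap_eq:
  assumes X: "\<And>k. k \<le> N \<Longrightarrow> fst p k \<in> L2 M M" and U: "\<And>k. k < N \<Longrightarrow> snd p k \<in> L2 M M"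
    and Z: "\<And>k. k \<le> N \<Longrightarrow> fst q k \<in> L2 M M" and V: "\<And>k. k < N \<Longrightarrow> snd q k \<in> L2 M M"
  shows "dfmap M N Dell DPhi p q = (\<Sum>k<N. \<integral>\<omega>. blinfun_apply (Dell k (fst p k \<omega>) (snd p k \<omega>)) (fst q k \<omega>, snd q k \<omega>) \<partial>M)
            + (\<integral>\<omega>. blinfun_apply (DPhi (fst p N \<omega>)) (fst q N \<omega>) \<partial>M)"
proof -
  have ie: "integrable M (\<lambda>\<omega>. blinfun_apply (Dell k (fst p k \<omega>) (snd p k \<omega>)) (fst q k \<omega>, snd q k \<omega>))" if k: "k < N" for k
    using Df_int(1)[OF ell_ctx[OF k] L2_pair(1)[OF X U[OF k]] L2_pair(1)[OF Z V[OF k]]] k by simp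
  have ip: "integrable M (\<lambda>\<omega>. blinfun_apply (DPhi (fst p N \<omega>)) (fst q N \<omega>))"
    using Df_int(1)[OF Phi_ctx X Z] by simp
  have isum: "integrable M (\<lambda>\<omega>. \<Sum>k<N. blinfun_apply (Dell k (fst p k \<omega>) (snd p k \<omega>)) (fst q k \<omega>, snd q k \<omega>))"
    by (rule Bochner_Integration.integrable_sum) (use ie in auto)
  show ?thesis unfolding dfmap_def
    apply (subst Bochner_Integration.integral_add[OF isum ip])
    apply (subst Bochner_Integration.integral_sum)
    using ie by auto
qed

end

lemma sum_atMost_split: "(\<Sum>k\<le>(N::nat). f k) = (\<Sum>k<N. f k) + (f N :: real)"
  using sum.lessThan_Suc[of f N] by (simp add: lessThan_Suc_atMost)

lemma arith_id:
  fixes A A0 C :: "nat \<Rightarrow> real"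
  shows "((\<Sum>k\<in>S. A k) + B - ((\<Sum>k\<in>S. A0 k) + B0)) / t - ((\<Sum>k\<in>S. C k) + D)
    = (\<Sum>k\<in>S. (A k - A0 k) / t - C k) + ((B - B0) / t - D)"
proof -
  have "(\<Sum>k\<in>S. (A k - A0 k) / t - C k) = ((\<Sum>k\<in>S. A k) - (\<Sum>k\<in>S. A0 k)) / t - (\<Sum>k\<in>S. C k)"
    by (simp add: sum_subtractf sum_divide_distrib[symmetric])
  then show ?thesis by (simp add: diff_divide_distrib add_divide_distrib)
qed

context L62f
begin

lemma comp_le_XU:
  shows "k \<le> N \<Longrightarrow> L2norm M (fst q k) \<le> normXU M N q" and "k < N \<Longrightarrow> L2norm M (snd q k) \<le> normXU M N q"
proof -
  have s1: "0 \<le> (\<Sum>k\<le>N. L2norm M (fst q k))" and s2: "0 \<le> (\<Sum>k<N. L2norm M (snd q k))"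
    by (auto intro: sum_nonneg L2norm_nonneg)
  show "k \<le> N \<Longrightarrow> L2norm M (fst q k) \<le> normXU M N q"
    using member_le_sum[of k "{..N}" "\<lambda>k. L2norm M (fst q k)"] s2 by (auto simp: normXU_def L2norm_nonneg)
  show "k < N \<Longrightarrow> L2norm M (snd q k) \<le> normXU M N q"
    using member_le_sum[of k "{..<N}" "\<lambda>k. L2norm M (snd q k)"] s1 by (auto simp: normXU_def L2norm_nonneg)
qed

lemma normXU_tri:
  assumes p: "p \<in> Dom M w N" and q: "q \<in> Dom M w N"
  shows "normXU M N q \<le> normXU M N p + normXU M N (plincomb 1 q (-1) p)"
proof -
  have a: "L2norm M (fst q k) \<le> L2norm M (fst p k) + L2norm M (\<lambda>\<omega>. fst q k \<omega> - fst p k \<omega>)" if "k \<le> N" for k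
  proof -
    have "fst q k = (\<lambda>\<omega>. fst p k \<omega> + (fst q k \<omega> - fst p k \<omega>))" by (simp add: fun_eq_iff)
    then show ?thesis using L2_add(2)[OF DXM[OF p that] L2_diff(1)[OF DXM[OF q that] DXM[OF p that]]] by simp
  qed
  have b: "L2norm M (snd q k) \<le> L2norm M (snd p k) + L2norm M (\<lambda>\<omega>. snd q k \<omega> - snd p k \<omega>)" if "k < N" for k
  proof -
    have "snd q k = (\<lambda>\<omega>. snd p k \<omega> + (snd q k \<omega> - snd p k \<omega>))" by (simp add: fun_eq_iff)
    then show ?thesis using L2_add(2)[OF DUM[OF p that] L2_diff(1)[OF DUM[OF q that] DUM[OF p that]]] by simp
  qed
  have "(\<Sum>k\<le>N. L2norm M (fst q k)) \<le> (\<Sum>k\<le>N. L2norm M (fst p k) + L2norm M (\<lambda>\<omega>. fst q k \<omega> - fst p k \<omega>))"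
    by (rule sum_mono) (use a in auto)
  moreover have "(\<Sum>k<N. L2norm M (snd q k)) \<le> (\<Sum>k<N. L2norm M (snd p k) + L2norm M (\<lambda>\<omega>. snd q k \<omega> - snd p k \<omega>))"
    by (rule sum_mono) (use b in auto)
  ultimately show ?thesis unfolding normXU_diff by (simp add: normXU_def sum.distrib)
qed

lemma res4_core:
  fixes p q1 q2 :: "(nat \<Rightarrow> 'a \<Rightarrow> real^'n) \<times> (nat \<Rightarrow> 'a \<Rightarrow> real^'m)"
  assumes p: "p \<in> Dom M w N" and q1: "q1 \<in> Dom M w N" and q2: "q2 \<in> Dom M w N"
    and near: "normXU M N (plincomb 1 q1 (-1) p) < 1 \<and> normXU M N (plincomb 1 q2 (-1) p) < 1"
  shows "\<bar>fmap M N ell Phi q1 - fmap M N ell Phi q2\<bar> \<le> K4 * (5 + 4 * normXU M N p) * normXU M N (plincomb 1 q1 (-1) q2)"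
proof -
    define R where "R = 5 + 4 * normXU M N p"
    have B1: "normXU M N q1 \<le> normXU M N p + 1" using normXU_tri[OF p q1] near by linarith
    have B2: "normXU M N q2 \<le> normXU M N p + 1" using normXU_tri[OF p q2] near by linarith
    let ?dx = "\<lambda>k. L2norm M (\<lambda>\<omega>. fst q1 k \<omega> - fst q2 k \<omega>)" and ?du = "\<lambda>k. L2norm M (\<lambda>\<omega>. snd q1 k \<omega> - snd q2 k \<omega>)"
    have R0: "R \<ge> 0" unfolding R_def using comp_le_XU(1)[of 0 p] L2norm_nonneg[of M "fst p 0"] by simp
    have ek: "\<bar>(\<integral>\<omega>. ell k (fst q1 k \<omega>) (snd q1 k \<omega>) \<partial>M) - (\<integral>\<omega>. ell k (fst q2 k \<omega>) (snd q2 k \<omega>) \<partial>M)\<bar>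
        \<le> K4 * R * (?dx k + ?du k)" if k: "k < N" for k
    proof -
      have kl: "k \<le> N" using k by simp
      note a1 = L2_pair[OF DXM[OF q1 kl] DUM[OF q1 k]]
      note a2 = L2_pair[OF DXM[OF q2 kl] DUM[OF q2 k]]
      have l: "\<bar>(\<integral>\<omega>. ell k (fst q1 k \<omega>) (snd q1 k \<omega>) \<partial>M) - (\<integral>\<omega>. ell k (fst q2 k \<omega>) (snd q2 k \<omega>) \<partial>M)\<bar>
        \<le> K4 * ((1 + L2norm M (\<lambda>\<omega>. (fst q1 k \<omega>, snd q1 k \<omega>)) + L2norm M (\<lambda>\<omega>. (fst q2 k \<omega>, snd q2 k \<omega>)))
             * L2norm M (\<lambda>\<omega>. (fst q1 k \<omega>, snd q1 k \<omega>) - (fst q2 k \<omega>, snd q2 k \<omega>)))"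
        using f_lip[OF ell_ctx[OF k] a1(1) a2(1)] by simp
      have d: "L2norm M (\<lambda>\<omega>. (fst q1 k \<omega>, snd q1 k \<omega>) - (fst q2 k \<omega>, snd q2 k \<omega>)) \<le> ?dx k + ?du k"
        using L2_pair(2)[OF L2_diff(1)[OF DXM[OF q1 kl] DXM[OF q2 kl]] L2_diff(1)[OF DUM[OF q1 k] DUM[OF q2 k]]] by simp
      have r: "1 + L2norm M (\<lambda>\<omega>. (fst q1 k \<omega>, snd q1 k \<omega>)) + L2norm M (\<lambda>\<omega>. (fst q2 k \<omega>, snd q2 k \<omega>)) \<le> R"
        using a1(2) a2(2) comp_le_XU(1)[OF kl, of q1] comp_le_XU(2)[OF k, of q1]
          comp_le_XU(1)[OF kl, of q2] comp_le_XU(2)[OF k, of q2] B1 B2 unfolding R_def by linarith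
      have "K4 * ((1 + L2norm M (\<lambda>\<omega>. (fst q1 k \<omega>, snd q1 k \<omega>)) + L2norm M (\<lambda>\<omega>. (fst q2 k \<omega>, snd q2 k \<omega>)))
             * L2norm M (\<lambda>\<omega>. (fst q1 k \<omega>, snd q1 k \<omega>) - (fst q2 k \<omega>, snd q2 k \<omega>)))
          \<le> K4 * (R * (?dx k + ?du k))"
        by (intro mult_left_mono mult_mono r d K40 R0 L2norm_nonneg)
      then show ?thesis using l by simp
    qed
    have eN: "\<bar>(\<integral>\<omega>. Phi (fst q1 N \<omega>) \<partial>M) - (\<integral>\<omega>. Phi (fst q2 N \<omega>) \<partial>M)\<bar> \<le> K4 * R * ?dx N"
    proof -
      note l = f_lip[OF Phi_ctx DXM[OF q1 order_refl] DXM[OF q2 order_refl]]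
      have r: "1 + L2norm M (fst q1 N) + L2norm M (fst q2 N) \<le> R"
        using comp_le_XU(1)[OF order_refl, of q1] comp_le_XU(1)[OF order_refl, of q2] B1 B2 L2norm_nonneg[of M "fst p 0"]
          comp_le_XU(1)[of 0 p] unfolding R_def by linarith
      have "K4 * ((1 + L2norm M (fst q1 N) + L2norm M (fst q2 N)) * ?dx N) \<le> K4 * (R * ?dx N)"
        by (intro mult_left_mono mult_right_mono r K40 L2norm_nonneg)
      then show ?thesis using l by simp
    qed
    have X1: "\<And>k. k \<le> N \<Longrightarrow> fst q1 k \<in> L2 M M" and U1: "\<And>k. k < N \<Longrightarrow> snd q1 k \<in> L2 M M"
      and X2: "\<And>k. k \<le> N \<Longrightarrow> fst q2 k \<in> L2 M M" and U2: "\<And>k. k < N \<Longrightarrow> snd q2 k \<in> L2 M M"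
      using DXM[OF q1] DUM[OF q1] DXM[OF q2] DUM[OF q2] by auto
    have e: "fmap M N ell Phi q1 - fmap M N ell Phi q2
        = (\<Sum>k<N. (\<integral>\<omega>. ell k (fst q1 k \<omega>) (snd q1 k \<omega>) \<partial>M) - (\<integral>\<omega>. ell k (fst q2 k \<omega>) (snd q2 k \<omega>) \<partial>M))
          + ((\<integral>\<omega>. Phi (fst q1 N \<omega>) \<partial>M) - (\<integral>\<omega>. Phi (fst q2 N \<omega>) \<partial>M))"
      using fmap_eq[OF X1 U1] fmap_eq[OF X2 U2] by (simp add: sum_subtractf)
    have "\<bar>fmap M N ell Phi q1 - fmap M N ell Phi q2\<bar>
        \<le> (\<Sum>k<N. \<bar>(\<integral>\<omega>. ell k (fst q1 k \<omega>) (snd q1 k \<omega>) \<partial>M) - (\<integral>\<omega>. ell k (fst q2 k \<omega>) (snd q2 k \<omega>) \<partial>M)\<bar>)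
          + \<bar>(\<integral>\<omega>. Phi (fst q1 N \<omega>) \<partial>M) - (\<integral>\<omega>. Phi (fst q2 N \<omega>) \<partial>M)\<bar>"
      unfolding e
      using abs_triangle_ineq[of "\<Sum>k<N. (\<integral>\<omega>. ell k (fst q1 k \<omega>) (snd q1 k \<omega>) \<partial>M) - (\<integral>\<omega>. ell k (fst q2 k \<omega>) (snd q2 k \<omega>) \<partial>M)"
          "(\<integral>\<omega>. Phi (fst q1 N \<omega>) \<partial>M) - (\<integral>\<omega>. Phi (fst q2 N \<omega>) \<partial>M)"]
        sum_abs[of "\<lambda>k. (\<integral>\<omega>. ell k (fst q1 k \<omega>) (snd q1 k \<omega>) \<partial>M) - (\<integral>\<omega>. ell k (fst q2 k \<omega>) (snd q2 k \<omega>) \<partial>M)" "{..<N}"]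
      by linarith
    also have "\<dots> \<le> (\<Sum>k<N. K4 * R * (?dx k + ?du k)) + K4 * R * ?dx N"
      by (intro add_mono sum_mono ek eN) auto
    also have "\<dots> = K4 * R * normXU M N (plincomb 1 q1 (-1) q2)"
      unfolding normXU_diff sum_atMost_split by (simp add: sum_distrib_left sum.distrib algebra_simps)
    finally show ?thesis unfolding R_def .
qed

lemma res4: "loc_lipschitz_F M w N (fmap M N ell Phi)"
  unfolding loc_lipschitz_F_def
proof (intro ballI)
  fix p :: "(nat \<Rightarrow> 'a \<Rightarrow> real^'n) \<times> (nat \<Rightarrow> 'a \<Rightarrow> real^'m)"
  assume p: "p \<in> Dom M w N"
  show "\<exists>r>0. \<exists>L. \<forall>q1\<in>Dom M w N. \<forall>q2\<in>Dom M w N.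
     normXU M N (plincomb 1 q1 (-1) p) < r \<and> normXU M N (plincomb 1 q2 (-1) p) < r \<longrightarrow>
     \<bar>fmap M N ell Phi q1 - fmap M N ell Phi q2\<bar> \<le> L * normXU M N (plincomb 1 q1 (-1) q2)"
    using res4_core[OF p] by (intro exI[of _ "1::real"] conjI exI[of _ "K4 * (5 + 4 * normXU M N p)"]) auto
qed


lemma dfm_int:
  assumes X: "\<And>k. k \<le> N \<Longrightarrow> fst p k \<in> L2 M M" and U: "\<And>k. k < N \<Longrightarrow> snd p k \<in> L2 M M"
    and Z: "\<And>k. k \<le> N \<Longrightarrow> fst q k \<in> L2 M M" and V: "\<And>k. k < N \<Longrightarrow> snd q k \<in> L2 M M"
  shows "integrable M (\<lambda>\<omega>. (\<Sum>k<N. blinfun_apply (Dell k (fst p k \<omega>) (snd p k \<omega>)) (fst q k \<omega>, snd q k \<omega>))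
            + blinfun_apply (DPhi (fst p N \<omega>)) (fst q N \<omega>))"
proof -
  have ie: "integrable M (\<lambda>\<omega>. blinfun_apply (Dell k (fst p k \<omega>) (snd p k \<omega>)) (fst q k \<omega>, snd q k \<omega>))" if k: "k < N" for k
    using Df_int(1)[OF ell_ctx[OF k] L2_pair(1)[OF X U[OF k]] L2_pair(1)[OF Z V[OF k]]] k by simp
  have ip: "integrable M (\<lambda>\<omega>. blinfun_apply (DPhi (fst p N \<omega>)) (fst q N \<omega>))"
    using Df_int(1)[OF Phi_ctx X Z] by simp
  show ?thesis
    by (intro Bochner_Integration.integrable_add Bochner_Integration.integrable_sum ip ie) auto
qed

lemma res5a:
  assumes p: "p \<in> Dom M w N" and q1: "q1 \<in> Dom M w N" and q2: "q2 \<in> Dom M w N"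
  shows "dfmap M N Dell DPhi p (plincomb a q1 c q2) = a * dfmap M N Dell DPhi p q1 + c * dfmap M N Dell DPhi p q2"
proof -
  have X: "\<And>k. k \<le> N \<Longrightarrow> fst p k \<in> L2 M M" and U: "\<And>k. k < N \<Longrightarrow> snd p k \<in> L2 M M"
    using DXM[OF p] DUM[OF p] by auto
  note i1 = dfm_int[OF X U DXM[OF q1] DUM[OF q1]]
  note i2 = dfm_int[OF X U DXM[OF q2] DUM[OF q2]]
  let ?I1 = "\<lambda>\<omega>. (\<Sum>k<N. blinfun_apply (Dell k (fst p k \<omega>) (snd p k \<omega>)) (fst q1 k \<omega>, snd q1 k \<omega>))
            + blinfun_apply (DPhi (fst p N \<omega>)) (fst q1 N \<omega>)"
  let ?I2 = "\<lambda>\<omega>. (\<Sum>k<N. blinfun_apply (Dell k (fst p k \<omega>) (snd p k \<omega>)) (fst q2 k \<omega>, snd q2 k \<omega>))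
            + blinfun_apply (DPhi (fst p N \<omega>)) (fst q2 N \<omega>)"
  have pw: "(\<Sum>k<N. blinfun_apply (Dell k (fst p k \<omega>) (snd p k \<omega>)) (fst (plincomb a q1 c q2) k \<omega>, snd (plincomb a q1 c q2) k \<omega>))
            + blinfun_apply (DPhi (fst p N \<omega>)) (fst (plincomb a q1 c q2) N \<omega>) = a * ?I1 \<omega> + c * ?I2 \<omega>" for \<omega>
    by (simp add: plincomb_def lincomb_def blin_lin blinfun.add_right blinfun.scaleR_right sum.distrib sum_distrib_left algebra_simps)
  have "dfmap M N Dell DPhi p (plincomb a q1 c q2) = (\<integral>\<omega>. a * ?I1 \<omega> + c * ?I2 \<omega> \<partial>M)"
    unfolding dfmap_def pw ..
  also have "\<dots> = a * (\<integral>\<omega>. ?I1 \<omega> \<partial>M) + c * (\<integral>\<omega>. ?I2 \<omega> \<partial>M)"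
    using i1 i2 by simp
  finally show ?thesis by (simp add: dfmap_def)
qed

lemma res5b:
  assumes p: "p \<in> Dom M w N" and q: "q \<in> Dom M w N"
  shows "\<bar>dfmap M N Dell DPhi p q\<bar> \<le> K4 * (1 + 2 * normXU M N p) * normXU M N q"
proof -
  define C where "C = K4 * (1 + 2 * normXU M N p)"
  have C0: "C \<ge> 0" unfolding C_def using K40 comp_le_XU(1)[of 0 p] L2norm_nonneg[of M "fst p 0"] by simp
  have X: "\<And>k. k \<le> N \<Longrightarrow> fst p k \<in> L2 M M" and U: "\<And>k. k < N \<Longrightarrow> snd p k \<in> L2 M M"
    and Z: "\<And>k. k \<le> N \<Longrightarrow> fst q k \<in> L2 M M" and V: "\<And>k. k < N \<Longrightarrow> snd q k \<in> L2 M M"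
    using DXM[OF p] DUM[OF p] DXM[OF q] DUM[OF q] by auto
  have ek: "\<bar>\<integral>\<omega>. blinfun_apply (Dell k (fst p k \<omega>) (snd p k \<omega>)) (fst q k \<omega>, snd q k \<omega>) \<partial>M\<bar>
      \<le> C * (L2norm M (fst q k) + L2norm M (snd q k))" if k: "k < N" for k
  proof -
    have kl: "k \<le> N" using k by simp
    note a = L2_pair[OF X[OF kl] U[OF k]]
    note h = L2_pair[OF Z[OF kl] V[OF k]]
    have l: "\<bar>\<integral>\<omega>. blinfun_apply (Dell k (fst p k \<omega>) (snd p k \<omega>)) (fst q k \<omega>, snd q k \<omega>) \<partial>M\<bar>
      \<le> K4 * ((1 + L2norm M (\<lambda>\<omega>. (fst p k \<omega>, snd p k \<omega>))) * L2norm M (\<lambda>\<omega>. (fst q k \<omega>, snd q k \<omega>)))"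
      using Df_int(2)[OF ell_ctx[OF k] a(1) h(1)] by simp
    have r: "1 + L2norm M (\<lambda>\<omega>. (fst p k \<omega>, snd p k \<omega>)) \<le> 1 + 2 * normXU M N p"
      using a(2) comp_le_XU(1)[OF kl, of p] comp_le_XU(2)[OF k, of p] by linarith
    have "K4 * ((1 + L2norm M (\<lambda>\<omega>. (fst p k \<omega>, snd p k \<omega>))) * L2norm M (\<lambda>\<omega>. (fst q k \<omega>, snd q k \<omega>)))
        \<le> K4 * ((1 + 2 * normXU M N p) * (L2norm M (fst q k) + L2norm M (snd q k)))"
      by (intro mult_left_mono mult_mono r h(2) K40 L2norm_nonneg) (use L2norm_nonneg[of M "fst p 0"] comp_le_XU(1)[of 0 p] in auto)
    then show ?thesis using l by (simp add: C_def)
  qed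
  have eN: "\<bar>\<integral>\<omega>. blinfun_apply (DPhi (fst p N \<omega>)) (fst q N \<omega>) \<partial>M\<bar> \<le> C * L2norm M (fst q N)"
  proof -
    note l = Df_int(2)[OF Phi_ctx X[OF order_refl] Z[OF order_refl]]
    have r: "1 + L2norm M (fst p N) \<le> 1 + 2 * normXU M N p"
      using comp_le_XU(1)[OF order_refl, of p] L2norm_nonneg[of M "fst p N"] by linarith
    have "K4 * ((1 + L2norm M (fst p N)) * L2norm M (fst q N)) \<le> K4 * ((1 + 2 * normXU M N p) * L2norm M (fst q N))"
      by (intro mult_left_mono mult_right_mono r K40 L2norm_nonneg)
    then show ?thesis using l by (simp add: C_def)
  qed
  have "\<bar>dfmap M N Dell DPhi p q\<bar>
      \<le> (\<Sum>k<N. \<bar>\<integral>\<omega>. blinfun_apply (Dell k (fst p k \<omega>) (snd p k \<omega>)) (fst q k \<omega>, snd q k \<omega>) \<partial>M\<bar>)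
        + \<bar>\<integral>\<omega>. blinfun_apply (DPhi (fst p N \<omega>)) (fst q N \<omega>) \<partial>M\<bar>"
    using dfmap_eq[OF X U Z V] abs_triangle_ineq[of "\<Sum>k<N. \<integral>\<omega>. blinfun_apply (Dell k (fst p k \<omega>) (snd p k \<omega>)) (fst q k \<omega>, snd q k \<omega>) \<partial>M"
        "\<integral>\<omega>. blinfun_apply (DPhi (fst p N \<omega>)) (fst q N \<omega>) \<partial>M"]
      sum_abs[of "\<lambda>k. \<integral>\<omega>. blinfun_apply (Dell k (fst p k \<omega>) (snd p k \<omega>)) (fst q k \<omega>, snd q k \<omega>) \<partial>M" "{..<N}"]
    by linarith
  also have "\<dots> \<le> (\<Sum>k<N. C * (L2norm M (fst q k) + L2norm M (snd q k))) + C * L2norm M (fst q N)"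
    by (intro add_mono sum_mono ek eN) auto
  also have "\<dots> = C * normXU M N q"
    unfolding normXU_def sum_atMost_split by (simp add: sum_distrib_left sum.distrib algebra_simps)
  finally show ?thesis unfolding C_def .
qed

lemma res5c:
  assumes p: "p \<in> Dom M w N" and q: "q \<in> Dom M w N"
  shows "((\<lambda>t. (fmap M N ell Phi (plincomb 1 p t q) - fmap M N ell Phi p) / t) \<longlongrightarrow> dfmap M N Dell DPhi p q) (at 0)"
proof -
  have X: "\<And>k. k \<le> N \<Longrightarrow> fst p k \<in> L2 M M" and U: "\<And>k. k < N \<Longrightarrow> snd p k \<in> L2 M M"
    and Z: "\<And>k. k \<le> N \<Longrightarrow> fst q k \<in> L2 M M" and V: "\<And>k. k < N \<Longrightarrow> snd q k \<in> L2 M M"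
    using DXM[OF p] DUM[OF p] DXM[OF q] DUM[OF q] by auto
  have Xt: "fst (plincomb 1 p t q) k \<in> L2 M M" if "k \<le> N" for k t
  proof -
    have "fst (plincomb 1 p t q) k = (\<lambda>\<omega>. fst p k \<omega> + t *\<^sub>R fst q k \<omega>)" by (simp add: plincomb_def lincomb_def fun_eq_iff)
    then show ?thesis using L2_add(1)[OF X[OF that] L2_scale(1)[OF Z[OF that]]] by simp
  qed
  have Ut: "snd (plincomb 1 p t q) k \<in> L2 M M" if "k < N" for k t
  proof -
    have "snd (plincomb 1 p t q) k = (\<lambda>\<omega>. snd p k \<omega> + t *\<^sub>R snd q k \<omega>)" by (simp add: plincomb_def lincomb_def fun_eq_iff)
    then show ?thesis using L2_add(1)[OF U[OF that] L2_scale(1)[OF V[OF that]]] by simp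
  qed
  have Lk: "((\<lambda>t. ((\<integral>\<omega>. ell k (fst p k \<omega> + t *\<^sub>R fst q k \<omega>) (snd p k \<omega> + t *\<^sub>R snd q k \<omega>) \<partial>M)
        - (\<integral>\<omega>. ell k (fst p k \<omega>) (snd p k \<omega>) \<partial>M)) / t
        - (\<integral>\<omega>. blinfun_apply (Dell k (fst p k \<omega>) (snd p k \<omega>)) (fst q k \<omega>, snd q k \<omega>) \<partial>M)) \<longlongrightarrow> 0) (at 0)"
    if k: "k < N" for k
    using f_dir'[OF ell_ctx[OF k] L2_pair(1)[OF X U[OF k]] L2_pair(1)[OF Z V[OF k]]] k by simp
  have LN: "((\<lambda>t. ((\<integral>\<omega>. Phi (fst p N \<omega> + t *\<^sub>R fst q N \<omega>) \<partial>M)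
        - (\<integral>\<omega>. Phi (fst p N \<omega>) \<partial>M)) / t
        - (\<integral>\<omega>. blinfun_apply (DPhi (fst p N \<omega>)) (fst q N \<omega>) \<partial>M)) \<longlongrightarrow> 0) (at 0)"
    using f_dir'[OF Phi_ctx X[OF order_refl] Z[OF order_refl]] by simp
  have eq: "(fmap M N ell Phi (plincomb 1 p t q) - fmap M N ell Phi p) / t - dfmap M N Dell DPhi p q
     = (\<Sum>k<N. ((\<integral>\<omega>. ell k (fst p k \<omega> + t *\<^sub>R fst q k \<omega>) (snd p k \<omega> + t *\<^sub>R snd q k \<omega>) \<partial>M)
        - (\<integral>\<omega>. ell k (fst p k \<omega>) (snd p k \<omega>) \<partial>M)) / t
        - (\<integral>\<omega>. blinfun_apply (Dell k (fst p k \<omega>) (snd p k \<omega>)) (fst q k \<omega>, snd q k \<omega>) \<partial>M))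
       + (((\<integral>\<omega>. Phi (fst p N \<omega> + t *\<^sub>R fst q N \<omega>) \<partial>M)
        - (\<integral>\<omega>. Phi (fst p N \<omega>) \<partial>M)) / t
        - (\<integral>\<omega>. blinfun_apply (DPhi (fst p N \<omega>)) (fst q N \<omega>) \<partial>M))" for t
  proof -
    have e1: "fmap M N ell Phi (plincomb 1 p t q)
        = (\<Sum>k<N. \<integral>\<omega>. ell k (fst p k \<omega> + t *\<^sub>R fst q k \<omega>) (snd p k \<omega> + t *\<^sub>R snd q k \<omega>) \<partial>M)
          + (\<integral>\<omega>. Phi (fst p N \<omega> + t *\<^sub>R fst q N \<omega>) \<partial>M)"
      using fmap_eq[OF Xt Ut] by (simp add: plincomb_def lincomb_def)
    have e2: "fmap M N ell Phi p = (\<Sum>k<N. \<integral>\<omega>. ell k (fst p k \<omega>) (snd p k \<omega>) \<partial>M) + (\<integral>\<omega>. Phi (fst p N \<omega>) \<partial>M)"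
      by (rule fmap_eq) (auto intro: X U)
    have e3: "dfmap M N Dell DPhi p q = (\<Sum>k<N. \<integral>\<omega>. blinfun_apply (Dell k (fst p k \<omega>) (snd p k \<omega>)) (fst q k \<omega>, snd q k \<omega>) \<partial>M)
            + (\<integral>\<omega>. blinfun_apply (DPhi (fst p N \<omega>)) (fst q N \<omega>) \<partial>M)"
      by (rule dfmap_eq) (auto intro: X U Z V)
    show ?thesis
      apply (subst e1)
      apply (subst e2)
      apply (subst e3)
      apply (rule arith_id)
      done
  qed
  have "((\<lambda>t. (fmap M N ell Phi (plincomb 1 p t q) - fmap M N ell Phi p) / t - dfmap M N Dell DPhi p q) \<longlongrightarrow> 0) (at 0)"
    unfolding eq by (intro tendsto_add_zero tendsto_null_sum Lk LN) auto
  then show ?thesis by (rule LIM_zero_cancel)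
qed

lemma res5:
  assumes p: "p \<in> Dom M w N"
  shows "gateaux_deriv_F M w N (fmap M N ell Phi) (dfmap M N Dell DPhi p) p"
  unfolding gateaux_deriv_F_def
  using res5a[OF p] res5b[OF p] res5c[OF p] by blast

end

theorem lemma6p2:
  fixes M :: "'a measure" and w :: "nat \<Rightarrow> 'a \<Rightarrow> real^'d" and N :: nat
    and b :: "nat \<Rightarrow> real^'n \<Rightarrow> real^'m \<Rightarrow> real^'n"
    and Db :: "nat \<Rightarrow> real^'n \<Rightarrow> real^'m \<Rightarrow> ((real^'n) \<times> (real^'m)) \<Rightarrow>\<^sub>L (real^'n)"
    and sig :: "nat \<Rightarrow> 'd \<Rightarrow> real^'n \<Rightarrow> real^'m \<Rightarrow> real^'n"
    and Dsig :: "nat \<Rightarrow> 'd \<Rightarrow> real^'n \<Rightarrow> real^'m \<Rightarrow> ((real^'n) \<times> (real^'m)) \<Rightarrow>\<^sub>L (real^'n)"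
    and ell :: "nat \<Rightarrow> real^'n \<Rightarrow> real^'m \<Rightarrow> real"
    and Dell :: "nat \<Rightarrow> real^'n \<Rightarrow> real^'m \<Rightarrow> ((real^'n) \<times> (real^'m)) \<Rightarrow>\<^sub>L real"
    and Phi :: "real^'n \<Rightarrow> real" and DPhi :: "real^'n \<Rightarrow> (real^'n) \<Rightarrow>\<^sub>L real"
    and x0h :: "real^'n" and c1 c2 :: real
  assumes P: "prob_space M"
    and w0: "w 0 = (\<lambda>\<omega>. 0)"
    and w_meas: "\<forall>k\<in>{1..N}. w k \<in> borel_measurable M"
    and w_indep: "prob_space.indep_vars M (\<lambda>_. borel) w {1..N}"
    and w_coord_indep: "\<forall>k\<in>{1..N}. prob_space.indep_vars M (\<lambda>_. borel) (\<lambda>i \<omega>. w k \<omega> $ i) UNIV"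
    and w_moments: "\<forall>k\<in>{1..N}. \<forall>i. integrable M (\<lambda>\<omega>. w k \<omega> $ i) \<and> integrable M (\<lambda>\<omega>. (w k \<omega> $ i)\<^sup>2)
        \<and> (\<integral>\<omega>. w k \<omega> $ i \<partial>M) = 0 \<and> (\<integral>\<omega>. (w k \<omega> $ i)\<^sup>2 \<partial>M) = 1"
    and c_pos: "c1 > 0" "c2 > 0"
    and b_deriv: "\<forall>k<N. \<forall>x u. ((\<lambda>p. b k (fst p) (snd p)) has_derivative blinfun_apply (Db k x u)) (at (x, u))"
    and b_C1: "\<forall>k<N. continuous_on UNIV (\<lambda>p. Db k (fst p) (snd p))"
    and b_growth: "\<forall>k<N. \<forall>x u. norm (b k x u) \<le> c1 * (1 + norm x + norm u)"
    and b_dbound: "\<forall>k<N. \<forall>x u. onorm (\<lambda>z. blinfun_apply (Db k x u) (z, 0))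
                               + onorm (\<lambda>v. blinfun_apply (Db k x u) (0, v)) \<le> c1"
    and sig_deriv: "\<forall>k<N. \<forall>j x u. ((\<lambda>p. sig k j (fst p) (snd p)) has_derivative blinfun_apply (Dsig k j x u)) (at (x, u))"
    and sig_C1: "\<forall>k<N. \<forall>j. continuous_on UNIV (\<lambda>p. Dsig k j (fst p) (snd p))"
    and sig_growth: "\<forall>k<N. \<forall>j x u. norm (sig k j x u) \<le> c1 * (1 + norm x + norm u)"
    and sig_dbound: "\<forall>k<N. \<forall>j x u. onorm (\<lambda>z. blinfun_apply (Dsig k j x u) (z, 0))
                               + onorm (\<lambda>v. blinfun_apply (Dsig k j x u) (0, v)) \<le> c1"
    and ell_deriv: "\<forall>k<N. \<forall>x u. ((\<lambda>p. ell k (fst p) (snd p)) has_derivative blinfun_apply (Dell k x u)) (at (x, u))"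
    and ell_C1: "\<forall>k<N. continuous_on UNIV (\<lambda>p. Dell k (fst p) (snd p))"
    and ell_growth: "\<forall>k<N. \<forall>x u. \<bar>ell k x u\<bar> \<le> c2 * (1 + norm x + norm u)\<^sup>2"
    and ell_dbound: "\<forall>k<N. \<forall>x u. onorm (\<lambda>z. blinfun_apply (Dell k x u) (z, 0))
                               + onorm (\<lambda>v. blinfun_apply (Dell k x u) (0, v)) \<le> c2 * (1 + norm x + norm u)"
    and Phi_deriv: "\<forall>x. (Phi has_derivative blinfun_apply (DPhi x)) (at x)"
    and Phi_C1: "continuous_on UNIV DPhi"
    and Phi_growth: "\<forall>x. \<bar>Phi x\<bar> \<le> c2 * (1 + norm x)\<^sup>2"
    and Phi_dbound: "\<forall>x. norm (DPhi x) \<le> c2 * (1 + norm x)"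
  shows "(\<forall>p\<in>Dom M w N. \<forall>k\<le>N. gmap w x0h b sig p k \<in> Xsp M w k)
       \<and> lipschitz_G M w N (gmap w x0h b sig)
       \<and> (\<forall>p\<in>Dom M w N. gateaux_deriv_G M w N (gmap w x0h b sig) (dgmap w Db Dsig p) p)
       \<and> loc_lipschitz_F M w N (fmap M N ell Phi)
       \<and> (\<forall>p\<in>Dom M w N. gateaux_deriv_F M w N (fmap M N ell Phi) (dfmap M N Dell DPhi p) p)"
  proof -
  interpret L: L62f M w N b Db sig Dsig ell Dell Phi DPhi c1 c2
    by (rule L62f.intro, rule L62.intro, (fact assms)+, rule L62f_axioms.intro, (fact assms)+)
  have r1: "\<forall>p\<in>Dom M w N. \<forall>k\<le>N. gmap w x0h b sig p k \<in> Xsp M w k"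
    using L.res1 by blast
  have r3: "\<forall>p\<in>Dom M w N. gateaux_deriv_G M w N (gmap w x0h b sig) (dgmap w Db Dsig p) p"
    using L.res3 by blast
  have r5: "\<forall>p\<in>Dom M w N. gateaux_deriv_F M w N (fmap M N ell Phi) (dfmap M N Dell DPhi p) p"
    using L.res5 by blast
  show ?thesis using r1 L.res2 r3 L.res4 r5 by (intro conjI)
qed

end
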